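(* Let $w$ be a decreasing weight on $(0,\infty)$ and $1<q<\infty$. The following are equivalent: (i) $\Lambda^1(w)\subset\Gamma^{1,q}(w)$. (ii) The Hardy operator $Sf(t)=\frac1t\int_0^t f(s)\,ds$ is bounded from $L^1_{\rm dec}(w)$ to $L^{1,q}(w)$, i.e. there is $C$ with $\|Sf\|_{L^{1,q}(w)}\le C\int_0^\infty f(t)w(t)\,dt$ for all nonnegative decreasing $f$ on $(0,\infty)$. (iii) $w\in B_1$.
   Context: A weight is a nonnegative locally integrable measurable function on $(0,\infty)$; "decreasing" means nonincreasing; $W(t)=\int_0^t w$. For a measurable function $f$ on $\mathbb{R}^n$, $f^*$ is its decreasing rearrangement and $f^{**}(t)=\frac1t\int_0^t f^*(s)\,ds$. $\|f\|_{\Lambda^1(w)}=\int_0^\infty f^*(t)w(t)\,dt$ and $\|f\|_{\Gamma^{1,q}(w)}=\big(\int_0^\infty (f^{**}(t))^qW^{q-1}(t)w(t)\,dt\big)^{1/q}$; $X\subset Y$ means $\|f\|_Y\le C\|f\|_X$ for all $f$. $L^{1,q}(w)$ is the Lorentz space on $(0,\infty)$ with respect to the measure $w(t)\,dt$: $\|g\|_{L^{1,q}(w)}=\big(\int_0^\infty t^{q-1}(g^*_w(t))^q\,dt\big)^{1/q}$, with $g^*_w$ the decreasing rearrangement of $g$ with respect to $w(t)\,dt$. $w\in B_1$ means there is $C$ with $\int_r^\infty\frac{w(s)}{s}\,ds\le\frac Cr\int_0^r w(s)\,ds$ for all $r>0$. *)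

theory Defs
  imports "HOL-Analysis.Analysis"
begin

definition enn_powr :: "ennreal \<Rightarrow> real \<Rightarrow> ennreal" where
  "enn_powr x p = (if x = top then top else ennreal (enn2real x powr p))"

definition rearr :: "'a measure \<Rightarrow> ('a \<Rightarrow> ennreal) \<Rightarrow> real \<Rightarrow> ennreal" where
  "rearr M g t = Inf {s. emeasure M {x \<in> space M. g x > s} \<le> ennreal t}"

definition dec_rearr :: "('a::euclidean_space \<Rightarrow> real) \<Rightarrow> real \<Rightarrow> ennreal" where
  "dec_rearr f = rearr lebesgue (\<lambda>x. ennreal \<bar>f x\<bar>)"

definition max_rearr :: "('a::euclidean_space \<Rightarrow> real) \<Rightarrow> real \<Rightarrow> ennreal" where
  "max_rearr f t = ennreal (1 / t) * (\<integral>\<^sup>+ s \<in> {0<..<t}. dec_rearr f s \<partial>lborel)"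

definition Wfun :: "(real \<Rightarrow> real) \<Rightarrow> real \<Rightarrow> ennreal" where
  "Wfun w t = (\<integral>\<^sup>+ s \<in> {0<..<t}. ennreal (w s) \<partial>lborel)"

definition Lambda1_norm :: "(real \<Rightarrow> real) \<Rightarrow> ('a::euclidean_space \<Rightarrow> real) \<Rightarrow> ennreal" where
  "Lambda1_norm w f = (\<integral>\<^sup>+ t \<in> {0<..}. dec_rearr f t * ennreal (w t) \<partial>lborel)"

definition Gamma1q_norm :: "(real \<Rightarrow> real) \<Rightarrow> real \<Rightarrow> ('a::euclidean_space \<Rightarrow> real) \<Rightarrow> ennreal" where
  "Gamma1q_norm w q f = enn_powr
     (\<integral>\<^sup>+ t \<in> {0<..}. enn_powr (max_rearr f t) q * enn_powr (Wfun w t) (q - 1) * ennreal (w t) \<partial>lborel)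
     (1 / q)"

definition wmeasure :: "(real \<Rightarrow> real) \<Rightarrow> real measure" where
  "wmeasure w = density (restrict_space lborel {0<..}) (\<lambda>t. ennreal (w t))"

definition L1q_norm :: "(real \<Rightarrow> real) \<Rightarrow> real \<Rightarrow> (real \<Rightarrow> ennreal) \<Rightarrow> ennreal" where
  "L1q_norm w q g = enn_powr
     (\<integral>\<^sup>+ t \<in> {0<..}. ennreal (t powr (q - 1)) * enn_powr (rearr (wmeasure w) g t) q \<partial>lborel)
     (1 / q)"

definition hardy :: "(real \<Rightarrow> real) \<Rightarrow> real \<Rightarrow> ennreal" where
  "hardy f t = ennreal (1 / t) * (\<integral>\<^sup>+ s \<in> {0<..<t}. ennreal (f s) \<partial>lborel)"

definition weight :: "(real \<Rightarrow> real) \<Rightarrow> bool" where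
  "weight w \<longleftrightarrow> w \<in> borel_measurable lborel \<and> (\<forall>t>0. w t \<ge> 0)
     \<and> (\<forall>t>0. set_integrable lborel {0<..<t} w)"

definition decreasing_on_pos :: "(real \<Rightarrow> real) \<Rightarrow> bool" where
  "decreasing_on_pos f \<longleftrightarrow> (\<forall>s t. 0 < s \<and> s \<le> t \<longrightarrow> f t \<le> f s)"

definition B1 :: "(real \<Rightarrow> real) \<Rightarrow> bool" where
  "B1 w \<longleftrightarrow> (\<exists>C::real. \<forall>r>0.
     (\<integral>\<^sup>+ s \<in> {r<..}. ennreal (w s / s) \<partial>lborel) \<le> ennreal (C / r) * Wfun w r)"

end

theory Submission
  imports Defs
begin
locale wsetup =
  fixes w :: "real \<Rightarrow> real" and q :: real
  assumes wt: "weight w" and wdec: "decreasing_on_pos w" and q1: "1 < q"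
begin

lemma w_nonneg: "0 < t \<Longrightarrow> 0 \<le> w t"
  using wt unfolding weight_def by auto

lemma w_meas[measurable]: "w \<in> borel_measurable borel"
  using wt unfolding weight_def by auto

lemma w_mono: "0 < s \<Longrightarrow> s \<le> t \<Longrightarrow> w t \<le> w s"
  using wdec unfolding decreasing_on_pos_def by auto

lemma Wfun_eq: "Wfun w t = (\<integral>\<^sup>+ s. ennreal (indicator {0<..<t} s * w s) \<partial>lborel)"
  unfolding Wfun_def by (intro nn_integral_cong) (auto simp: indicator_def)

lemma Wfun_fin: "Wfun w t < top"
proof (cases "t > 0")
  case True
  have "set_integrable lborel {0<..<t} w" using wt True unfolding weight_def by auto
  then have "integrable lborel (\<lambda>x. indicator {0<..<t} x *\<^sub>R w x)" unfolding set_integrable_def .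
  then have "(\<integral>\<^sup>+ x. ennreal (norm (indicator {0<..<t} x *\<^sub>R w x)) \<partial>lborel) < top"
    by (simp add: integrable_iff_bounded)
  moreover have "(\<integral>\<^sup>+ x. ennreal (norm (indicator {0<..<t} x *\<^sub>R w x)) \<partial>lborel) = Wfun w t"
    unfolding Wfun_eq by (intro nn_integral_cong) (auto simp: indicator_def w_nonneg)
  ultimately show ?thesis by simp
next
  case False
  then have "{0<..<t} = {}" by auto
  then show ?thesis unfolding Wfun_def by simp
qed

definition Wr :: "real \<Rightarrow> real" where "Wr t = enn2real (Wfun w t)"

lemma Wfun_Wr: "Wfun w t = ennreal (Wr t)"
  unfolding Wr_def using Wfun_fin[of t] by (simp add: ennreal_enn2real)

lemma Wr_nonneg: "0 \<le> Wr t" unfolding Wr_def by simp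

lemma Wfun_le_ind: "0 \<le> a \<Longrightarrow> a \<le> b \<Longrightarrow>
   Wfun w b = Wfun w a + (\<integral>\<^sup>+ s\<in>{a<..<b}. ennreal (w s) \<partial>lborel)"
proof -
  assume a: "0 \<le> a" "a \<le> b"
  have "Wfun w b = (\<integral>\<^sup>+ s. ennreal (w s) * indicator {0<..<a} s + ennreal (w s) * indicator {a<..<b} s \<partial>lborel)"
    unfolding Wfun_def
    apply (intro nn_integral_cong_AE)
    using AE_lborel_singleton[of a]
    apply eventually_elim
    using a by (auto simp: indicator_def)
  also have "\<dots> = Wfun w a + (\<integral>\<^sup>+ s\<in>{a<..<b}. ennreal (w s) \<partial>lborel)"
    unfolding Wfun_def by (subst nn_integral_add) auto
  finally show ?thesis .
qed

lemma W_mono: "s \<le> t \<Longrightarrow> Wfun w s \<le> Wfun w t"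
  unfolding Wfun_def
  by (intro nn_integral_mono) (auto simp: indicator_def)

lemma Wr_mono: "s \<le> t \<Longrightarrow> Wr s \<le> Wr t"
  using W_mono[of s t] Wr_nonneg[of t] by (simp add: Wfun_Wr ennreal_le_iff)

lemma piece_upper: assumes "0 < a" "a \<le> b"
  shows "(\<integral>\<^sup>+ s\<in>{a<..<b}. ennreal (w s) \<partial>lborel) \<le> ennreal ((b - a) * w a)"
proof -
  have "(\<integral>\<^sup>+ s\<in>{a<..<b}. ennreal (w s) \<partial>lborel) \<le> (\<integral>\<^sup>+ s. ennreal (w a) * indicator {a<..<b} s \<partial>lborel)"
    by (intro nn_integral_mono) (auto simp: indicator_def intro!: ennreal_leI w_mono assms)
  also have "\<dots> = ennreal (w a) * ennreal (b - a)"
    using assms by (subst nn_integral_cmult_indicator) auto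
  also have "\<dots> = ennreal ((b - a) * w a)"
    using assms w_nonneg[of a] by (simp add: ennreal_mult' mult.commute)
  finally show ?thesis .
qed

lemma piece_lower: assumes "0 < a" "a \<le> b"
  shows "ennreal ((b - a) * w b) \<le> (\<integral>\<^sup>+ s\<in>{a<..<b}. ennreal (w s) \<partial>lborel)"
proof -
  have "ennreal ((b - a) * w b) = ennreal (w b) * ennreal (b - a)"
    using assms w_nonneg[of b] by (simp add: ennreal_mult' mult.commute)
  also have "\<dots> = (\<integral>\<^sup>+ s. ennreal (w b) * indicator {a<..<b} s \<partial>lborel)"
    using assms by (subst nn_integral_cmult_indicator) auto
  also have "\<dots> \<le> (\<integral>\<^sup>+ s\<in>{a<..<b}. ennreal (w s) \<partial>lborel)"
    using assms by (intro nn_integral_mono) (auto simp: indicator_def intro!: ennreal_leI w_mono)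
  finally show ?thesis .
qed

lemma Wr_split: assumes "0 \<le> a" "a \<le> b"
  shows "ennreal (Wr b - Wr a) = (\<integral>\<^sup>+ s\<in>{a<..<b}. ennreal (w s) \<partial>lborel)"
proof -
  let ?I = "(\<integral>\<^sup>+ s\<in>{a<..<b}. ennreal (w s) \<partial>lborel)"
  have "ennreal (Wr b) = ennreal (Wr a) + ?I" using Wfun_le_ind[OF assms] by (simp add: Wfun_Wr)
  then have "?I = ennreal (Wr b) - ennreal (Wr a)" by (simp add: ennreal_add_diff_cancel_left)
  then show ?thesis using Wr_nonneg[of a] by (simp add: ennreal_minus)
qed

lemma Wr_diff_le: assumes "0 < a" "a \<le> b" shows "Wr b - Wr a \<le> (b - a) * w a"
proof -
  have "ennreal (Wr b - Wr a) \<le> ennreal ((b - a) * w a)" using Wr_split[of a b] piece_upper[OF assms] assms by simp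
  then show ?thesis using assms w_nonneg[of a] by (simp add: ennreal_le_iff)
qed

lemma Wr_diff_ge: assumes "0 < a" "a \<le> b" shows "(b - a) * w b \<le> Wr b - Wr a"
proof -
  have "ennreal ((b - a) * w b) \<le> ennreal (Wr b - Wr a)" using Wr_split[of a b] piece_lower[OF assms] assms by simp
  then show ?thesis using assms Wr_mono[of a b] by (simp add: ennreal_le_iff)
qed

lemma Wr_ge: assumes "0 < t" shows "t * w t \<le> Wr t"
proof -
  have "ennreal (t * w t) \<le> Wfun w t"
  proof -
    have "ennreal (t * w t) = ennreal (w t) * emeasure lborel {0<..<t}"
      using assms w_nonneg[of t] by (simp add: ennreal_mult' mult.commute)
    also have "\<dots> = (\<integral>\<^sup>+ s. ennreal (w t) * indicator {0<..<t} s \<partial>lborel)"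
      by (subst nn_integral_cmult_indicator) auto
    also have "\<dots> \<le> Wfun w t" unfolding Wfun_def
      by (intro nn_integral_mono) (auto simp: indicator_def intro!: ennreal_leI w_mono)
    finally show ?thesis .
  qed
  then show ?thesis by (simp add: Wfun_Wr Wr_nonneg ennreal_le_iff)
qed

lemma Wr_zero: "t \<le> 0 \<Longrightarrow> Wr t = 0"
  unfolding Wr_def Wfun_def by simp

lemma Wr_concave: assumes "0 < r" "r \<le> t" shows "r * Wr t \<le> t * Wr r"
proof -
  have "Wr t - Wr r \<le> (t - r) * w r" using Wr_diff_le assms by auto
  moreover have "r * w r \<le> Wr r" using Wr_ge assms by auto
  ultimately have "r * (Wr t - Wr r) \<le> (t - r) * Wr r"
    by (smt (verit) assms mult_left_mono mult.commute mult.left_commute)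
  then show ?thesis by (simp add: algebra_simps)
qed

lemma Wr_cont: assumes "0 < x" shows "isCont Wr x"
proof -
  have "\<bar>Wr y - Wr x\<bar> \<le> \<bar>y - x\<bar> * w (x/2)" if "x/2 \<le> y" for y
  proof (cases "x \<le> y")
    case True
    have "Wr y - Wr x \<le> (y - x) * w x" using Wr_diff_le[OF assms True] .
    moreover have "(y - x) * w x \<le> (y - x) * w (x/2)" using True assms by (intro mult_left_mono w_mono) auto
    ultimately show ?thesis using Wr_mono[OF True] True by auto
  next
    case False
    have 1: "Wr x - Wr y \<le> (x - y) * w y" using Wr_diff_le[of y x] False that assms by auto
    have "w y \<le> w (x/2)" using False that assms by (intro w_mono) auto
    then have 2: "(x - y) * w y \<le> (x - y) * w (x/2)" using False by (intro mult_left_mono) auto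
    have 3: "Wr x - Wr y \<le> (x - y) * w (x/2)" using 1 2 by linarith
    have "\<bar>Wr y - Wr x\<bar> = Wr x - Wr y" "\<bar>y - x\<bar> = x - y" using False Wr_mono[of y x] by auto
    then show ?thesis using 3 by simp
  qed
  show ?thesis unfolding isCont_def LIM_def dist_real_def
  proof (intro allI impI)
    fix e :: real assume e: "0 < e"
    define d where "d = min (x/2) (e / (w (x/2) + 1))"
    have wp: "0 \<le> w (x/2)" using w_nonneg assms by auto
    have d: "0 < d" using e assms wp unfolding d_def by auto
    show "\<exists>s>0. \<forall>y. y \<noteq> x \<and> \<bar>y - x\<bar> < s \<longrightarrow> \<bar>Wr y - Wr x\<bar> < e"
    proof (intro exI[of _ d] conjI allI impI d)
      fix y assume y: "y \<noteq> x \<and> \<bar>y - x\<bar> < d"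
      then have "\<bar>y - x\<bar> < x/2" unfolding d_def by auto
      then have "x/2 \<le> y" using abs_ge_minus_self[of "y-x"] by linarith
      then have "\<bar>Wr y - Wr x\<bar> \<le> \<bar>y - x\<bar> * w (x/2)" using \<open>x/2 \<le> y \<Longrightarrow> _\<close> by blast
      also have "\<dots> \<le> d * w (x/2)" using y wp by (intro mult_right_mono) auto
      also have "\<dots> \<le> (e / (w (x/2) + 1)) * w (x/2)" using wp unfolding d_def by (intro mult_right_mono) auto
      also have "\<dots> < e" using e wp by (simp add: field_simps)
      finally show "\<bar>Wr y - Wr x\<bar> < e" .
    qed
  qed
qed

end

lemma enn_powr_ennreal: "0 \<le> x \<Longrightarrow> enn_powr (ennreal x) p = ennreal (x powr p)"
  unfolding enn_powr_def by simp

lemma enn_powr_top[simp]: "enn_powr top p = top"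
  unfolding enn_powr_def by simp

lemma enn_powr_0[simp]: "enn_powr 0 p = 0"
  unfolding enn_powr_def by simp

lemma enn_powr_1[simp]: "enn_powr 1 p = 1"
  unfolding enn_powr_def by simp

lemma enn_powr_one[simp]: "enn_powr x 1 = x"
  by (cases x rule: ennreal_cases) (auto simp: enn_powr_ennreal)

lemma enn_powr_mono: assumes "0 < p" "x \<le> y" shows "enn_powr x p \<le> enn_powr y p"
proof (cases y rule: ennreal_cases)
  case (real b)
  then obtain a where a: "x = ennreal a" "0 \<le> a" using assms(2)
    by (cases x rule: ennreal_cases) (auto simp: top_unique)
  then have "a \<le> b" using assms real by (simp add: ennreal_le_iff)
  then show ?thesis using a real assms by (simp add: enn_powr_ennreal powr_mono2)
qed simp

lemma enn_powr_strict_mono: assumes "0 < p" "x < y" shows "enn_powr x p < enn_powr y p"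
proof (cases y rule: ennreal_cases)
  case (real b)
  then obtain a where a: "x = ennreal a" "0 \<le> a" using assms(2)
    by (cases x rule: ennreal_cases) auto
  then have "a < b" using assms real by (simp add: ennreal_less_iff)
  then show ?thesis using a real assms
    by (simp add: enn_powr_ennreal) (intro ennreal_lessI powr_less_mono2; auto)
next
  case top
  then obtain a where a: "x = ennreal a" "0 \<le> a" using assms(2)
    by (cases x rule: ennreal_cases) auto
  then show ?thesis using top by (simp add: enn_powr_ennreal)
qed

lemma enn_powr_le_iff: "0 < p \<Longrightarrow> enn_powr x p \<le> enn_powr y p \<longleftrightarrow> x \<le> y"
  using enn_powr_mono[of p x y] enn_powr_strict_mono[of p y x] by (auto simp: not_le[symmetric])

lemma enn_powr_less_iff: "0 < p \<Longrightarrow> enn_powr x p < enn_powr y p \<longleftrightarrow> x < y"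
  using enn_powr_le_iff[of p y x] by (auto simp: not_le[symmetric])

lemma enn_powr_eq_0_iff: "0 < p \<Longrightarrow> enn_powr x p = 0 \<longleftrightarrow> x = 0"
  using enn_powr_le_iff[of p x 0] by auto

lemma enn_powr_eq_top_iff: "enn_powr x p = top \<longleftrightarrow> x = top"
  by (cases x rule: ennreal_cases) (auto simp: enn_powr_ennreal)

definition decp :: "(real \<Rightarrow> ennreal) \<Rightarrow> bool" where
  "decp g \<longleftrightarrow> (\<forall>s t. 0 < s \<longrightarrow> s \<le> t \<longrightarrow> g t \<le> g s)"

lemma decpD: "decp g \<Longrightarrow> 0 < s \<Longrightarrow> s \<le> t \<Longrightarrow> g t \<le> g s"
  unfolding decp_def by auto

lemma decp_meas0:
  assumes "decp g" shows "(\<lambda>x. g x * indicator {0<..} x) \<in> borel_measurable borel"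
proof (rule borel_measurableI_greater)
  fix y :: ennreal
  have "{x \<in> space borel. y < g x * indicator {0<..} x} = {x. 0 < x \<and> y < g x}"
    by (auto simp: indicator_def)
  moreover have "is_interval {x::real. 0 < x \<and> y < g x}"
    unfolding is_interval_1
  proof (intro ballI allI impI)
    fix a b x assume a: "a \<in> {x. 0 < x \<and> y < g x}" and b: "b \<in> {x. 0 < x \<and> y < g x}" and x: "a \<le> x \<and> x \<le> b"
    then have "0 < x" by auto
    moreover have "g b \<le> g x" using decpD[OF assms \<open>0 < x\<close>] x by auto
    ultimately show "x \<in> {x. 0 < x \<and> y < g x}" using b by auto
  qed
  ultimately show "{x \<in> space borel. y < g x * indicator {0<..} x} \<in> sets borel"
    using real_interval_borel_measurable by auto
qed

lemma decp_meas:
  assumes "decp g" "A \<subseteq> {0<..}" "A \<in> sets borel"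
  shows "(\<lambda>x. g x * indicator A x) \<in> borel_measurable borel"
proof -
  have "(\<lambda>x. (g x * indicator {0<..} x) * indicator A x) \<in> borel_measurable borel"
    using decp_meas0[OF assms(1)] assms(3) by measurable
  moreover have "(\<lambda>x. (g x * indicator {0<..} x) * indicator A x) = (\<lambda>x. g x * indicator A x)"
    using assms(2) by (auto simp: indicator_def fun_eq_iff)
  ultimately show ?thesis by simp
qed

definition Sop :: "(real \<Rightarrow> ennreal) \<Rightarrow> real \<Rightarrow> ennreal" where
  "Sop g t = ennreal (1 / t) * (\<integral>\<^sup>+ s\<in>{0<..<t}. g s \<partial>lborel)"

lemma Sop_cong: assumes "\<And>s. 0 < s \<Longrightarrow> g s = g' s" shows "Sop g t = Sop g' t"
proof -
  have "(\<integral>\<^sup>+ s\<in>{0<..<t}. g s \<partial>lborel) = (\<integral>\<^sup>+ s\<in>{0<..<t}. g' s \<partial>lborel)"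
    by (rule nn_integral_cong) (auto simp: indicator_def assms)
  then show ?thesis unfolding Sop_def by simp
qed

lemma Sop_mono: "(\<And>s. 0 < s \<Longrightarrow> g s \<le> g' s) \<Longrightarrow> Sop g t \<le> Sop g' t"
  unfolding Sop_def by (intro mult_left_mono nn_integral_mono) (auto simp: indicator_def)

lemma Sop_ind: assumes "0 < t" "0 \<le> r"
  shows "Sop (indicator {0<..<r}) t = ennreal (min t r / t)"
proof -
  have "(\<lambda>s. indicator {0<..<r} s * indicator {0<..<t} s :: ennreal) = indicator {0<..<min t r}"
    by (auto simp: indicator_def fun_eq_iff)
  then have "(\<integral>\<^sup>+ s\<in>{0<..<t}. indicator {0<..<r} s \<partial>lborel) = emeasure lborel {0<..<min t r}"
    by simp
  also have "\<dots> = ennreal (min t r)" using assms by simp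
  finally show ?thesis unfolding Sop_def using assms
    by (simp add: ennreal_mult'[symmetric] divide_simps)
qed

lemma decp_Sop: assumes g: "decp g" shows "decp (Sop g)"
  unfolding decp_def
proof (intro allI impI)
  fix s t :: real assume s: "0 < s" and st: "s \<le> t"
  define I where "I = (\<lambda>t. \<integral>\<^sup>+ u\<in>{0<..<t}. g u \<partial>lborel)"
  define J where "J = (\<integral>\<^sup>+ u\<in>{s..<t}. g u \<partial>lborel)"
  have m1: "(\<lambda>x. g x * indicator {0<..<s} x) \<in> borel_measurable lborel"
  proof -
    have "{0<..<s} \<subseteq> {0<..}" by auto
    then show ?thesis using decp_meas[OF g, of "{0<..<s}"] by simp
  qed
  have m2: "(\<lambda>x. g x * indicator {s..<t} x) \<in> borel_measurable lborel"
  proof -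
    have "{s..<t} \<subseteq> {0<..}" using s by auto
    then show ?thesis using decp_meas[OF g, of "{s..<t}"] by simp
  qed
  have "I t = (\<integral>\<^sup>+ x. g x * indicator {0<..<s} x + g x * indicator {s..<t} x \<partial>lborel)"
    unfolding I_def using s st by (intro nn_integral_cong) (auto simp: indicator_def)
  also have "\<dots> = I s + J" unfolding I_def J_def by (rule nn_integral_add[OF m1 m2])
  finally have It: "I t = I s + J" .
  have J: "J \<le> ennreal (t - s) * g s"
  proof -
    have "J \<le> (\<integral>\<^sup>+ u. g s * indicator {s..<t} u \<partial>lborel)"
      unfolding J_def using s by (intro nn_integral_mono) (auto simp: indicator_def intro: decpD[OF g])
    also have "\<dots> = g s * ennreal (t - s)" using st by (subst nn_integral_cmult_indicator) auto
    finally show ?thesis by (simp add: mult.commute)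
  qed
  have Is: "ennreal s * g s \<le> I s"
  proof -
    have "ennreal s * g s = (\<integral>\<^sup>+ u. g s * indicator {0<..<s} u \<partial>lborel)"
      using s by (subst nn_integral_cmult_indicator) (auto simp: mult.commute)
    also have "\<dots> \<le> I s"
      unfolding I_def by (intro nn_integral_mono) (auto simp: indicator_def intro: decpD[OF g])
    finally show ?thesis .
  qed
  have key: "ennreal s * I t \<le> ennreal t * I s"
  proof -
    have "ennreal s * I t = ennreal s * I s + ennreal s * J" by (simp add: It distrib_left)
    also have "\<dots> \<le> ennreal s * I s + ennreal s * (ennreal (t - s) * g s)"
      by (intro add_left_mono mult_left_mono J) auto
    also have "\<dots> = ennreal s * I s + ennreal (t - s) * (ennreal s * g s)"
      by (simp add: mult_ac)
    also have "\<dots> \<le> ennreal s * I s + ennreal (t - s) * I s"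
      by (intro add_left_mono mult_left_mono Is) auto
    also have "\<dots> = ennreal t * I s"
      using s st by (simp add: distrib_right[symmetric] ennreal_plus[symmetric] del: ennreal_plus)
    finally show ?thesis .
  qed
  have "Sop g t = ennreal (1 / (s * t)) * (ennreal s * I t)"
    unfolding Sop_def I_def using s st
    by (simp add: mult.assoc[symmetric] ennreal_mult'[symmetric])
  also have "\<dots> \<le> ennreal (1 / (s * t)) * (ennreal t * I s)"
    by (intro mult_left_mono key) auto
  also have "\<dots> = Sop g s"
    unfolding Sop_def I_def using s st
    by (simp add: mult.assoc[symmetric] ennreal_mult'[symmetric])
  finally show "Sop g t \<le> Sop g s" .
qed


lemma enn_powr_mult: assumes "0 < p" shows "enn_powr (x * y) p = enn_powr x p * enn_powr y p"
proof (cases "x = 0 \<or> y = 0")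
  case True then show ?thesis by auto
next
  case False
  then show ?thesis
  proof (cases x rule: ennreal_cases; cases y rule: ennreal_cases)
    fix a b assume ab: "x = ennreal a" "0 \<le> a" "y = ennreal b" "0 \<le> b"
    then have "enn_powr (ennreal a * ennreal b) p = ennreal ((a * b) powr p)"
      by (simp add: ennreal_mult[symmetric] enn_powr_ennreal del: ennreal_mult)
    then show ?thesis using ab by (simp add: powr_mult ennreal_mult enn_powr_ennreal)
  next
    fix a assume "x = ennreal a" "0 \<le> a" "y = top"
    then show ?thesis using False assms
      by (simp add: enn_powr_ennreal ennreal_mult_top ennreal_top_mult enn_powr_eq_0_iff)
  next
    fix b assume "x = top" "y = ennreal b" "0 \<le> b"
    then show ?thesis using False assms
      by (simp add: enn_powr_ennreal ennreal_mult_top ennreal_top_mult enn_powr_eq_0_iff)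
  next
    assume "x = top" "y = top" then show ?thesis by simp
  qed
qed

lemma enn_powr_powr: assumes "0 < p" "0 < r" shows "enn_powr (enn_powr x p) r = enn_powr x (p * r)"
  by (cases x rule: ennreal_cases) (auto simp: enn_powr_ennreal powr_powr)

lemma enn_powr_inv: assumes "0 < p" shows "enn_powr (enn_powr x p) (1/p) = x"
  using enn_powr_powr[of p "1/p" x] assms by simp

lemma enn_powr_add: assumes "0 < p" "0 < r" shows "enn_powr x p * enn_powr x r = enn_powr x (p + r)"
proof (cases x rule: ennreal_cases)
  case (real a)
  then show ?thesis using assms
    by (cases "a = 0") (auto simp: enn_powr_ennreal ennreal_mult'[symmetric] powr_add)
next
  case top
  then show ?thesis by simp
qed

lemma enn_powr_SUP:
  assumes p: "0 < p" and ne: "A \<noteq> {}"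
  shows "enn_powr (Sup A) p = (SUP a\<in>A. enn_powr a p)"
proof (rule antisym)
  show "(SUP a\<in>A. enn_powr a p) \<le> enn_powr (Sup A) p"
    by (intro SUP_least enn_powr_mono p Sup_upper)
  define B where "B = (SUP a\<in>A. enn_powr a p)"
  have "a \<le> enn_powr B (1/p)" if "a \<in> A" for a
  proof -
    have "enn_powr a p \<le> B" unfolding B_def using that by (intro SUP_upper)
    then have "enn_powr (enn_powr a p) (1/p) \<le> enn_powr B (1/p)" using p by (intro enn_powr_mono) auto
    then show ?thesis using enn_powr_inv[OF p] by simp
  qed
  then have "Sup A \<le> enn_powr B (1/p)" by (intro Sup_least)
  then have "enn_powr (Sup A) p \<le> enn_powr (enn_powr B (1/p)) p" using p by (intro enn_powr_mono)
  also have "\<dots> = B" using enn_powr_powr[of "1/p" p B] p by simp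
  finally show "enn_powr (Sup A) p \<le> B" .
qed


lemma ennreal_top_if_ge_nat: assumes "\<And>n::nat. of_nat n \<le> (x::ennreal)" shows "x = top"
proof (rule ccontr)
  assume "x \<noteq> top"
  then obtain n where "x < of_nat n" using ennreal_Ex_less_of_nat top.not_eq_extremum by blast
  then show False using assms[of n] by simp
qed

lemma nn_integral_powr_Ioo:
  assumes p: "0 < p" and a: "0 \<le> a"
  shows "(\<integral>\<^sup>+ t\<in>{0<..<a}. ennreal (t powr (p - 1)) \<partial>lborel) = ennreal (a powr p / p)"
proof -
  have h: "((\<lambda>x. x powr (p - 1)) has_integral (a powr (p - 1 + 1) / (p - 1 + 1))) {0..a}"
    using p a by (intro has_integral_powr_from_0) auto
  have "(\<integral>\<^sup>+ x. ennreal (indicator {0..a} x * x powr (p - 1)) \<partial>lborel) = ennreal (a powr p / p)"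
    using nn_integral_has_integral_lebesgue[OF _ h] by simp
  moreover have "(\<integral>\<^sup>+ t\<in>{0<..<a}. ennreal (t powr (p - 1)) \<partial>lborel)
     = (\<integral>\<^sup>+ x. ennreal (indicator {0..a} x * x powr (p - 1)) \<partial>lborel)"
    apply (intro nn_integral_cong_AE)
    using AE_lborel_singleton[of a] AE_lborel_singleton[of 0]
    by eventually_elim (auto simp: indicator_def)
  ultimately show ?thesis by simp
qed

lemma nn_integral_powr_Ioi:
  assumes p: "1 \<le> p"
  shows "(\<integral>\<^sup>+ t\<in>{0<..}. ennreal (t powr (p - 1)) \<partial>lborel) = top"
proof (rule ennreal_top_if_ge_nat)
  fix n :: nat
  have "of_nat n = emeasure lborel {1..<1 + real n}" by (simp add: ennreal_of_nat_eq_real_of_nat)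
  also have "\<dots> = (\<integral>\<^sup>+ t. indicator {1..<1 + real n} t \<partial>lborel)" by simp
  also have "\<dots> \<le> (\<integral>\<^sup>+ t\<in>{0<..}. ennreal (t powr (p - 1)) \<partial>lborel)"
  proof (intro nn_integral_mono)
    fix t :: real
    show "indicator {1..<1 + real n} t \<le> ennreal (t powr (p - 1)) * indicator {0<..} t"
    proof (cases "t \<in> {1..<1 + real n}")
      case True
      then have "1 \<le> t powr (p - 1)" using p by (intro ge_one_powr_ge_zero) auto
      then show ?thesis using True by (auto simp: indicator_def)
    qed (auto simp: indicator_def)
  qed
  finally show "of_nat n \<le> (\<integral>\<^sup>+ t\<in>{0<..}. ennreal (t powr (p - 1)) \<partial>lborel)" .
qed

lemma layer_cake_powr:
  assumes p: "1 \<le> p"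
  shows "enn_powr x p = (\<integral>\<^sup>+ m. ennreal (p * m powr (p - 1)) * indicator {m. 0 < m \<and> ennreal m < x} m \<partial>lborel)"
proof (cases x rule: ennreal_cases)
  case (real a)
  have "(\<integral>\<^sup>+ m. ennreal (p * m powr (p - 1)) * indicator {m. 0 < m \<and> ennreal m < x} m \<partial>lborel)
      = (\<integral>\<^sup>+ m. ennreal p * (ennreal (m powr (p - 1)) * indicator {0<..<a} m) \<partial>lborel)"
    using real p by (intro nn_integral_cong) (auto simp: indicator_def ennreal_mult ennreal_less_iff)
  also have "\<dots> = ennreal p * ennreal (a powr p / p)"
    using p real by (subst nn_integral_cmult) (auto simp: nn_integral_powr_Ioo)
  also have "\<dots> = ennreal (a powr p)" using p real by (simp add: ennreal_mult[symmetric] del: ennreal_mult)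
  finally show ?thesis using real by (simp add: enn_powr_ennreal)
next
  case top
  have "(\<integral>\<^sup>+ m. ennreal (p * m powr (p - 1)) * indicator {m. 0 < m \<and> ennreal m < x} m \<partial>lborel)
      = (\<integral>\<^sup>+ m. ennreal p * (ennreal (m powr (p - 1)) * indicator {0<..} m) \<partial>lborel)"
    using top p by (intro nn_integral_cong) (auto simp: indicator_def ennreal_mult)
  also have "\<dots> = ennreal p * top"
    using p by (subst nn_integral_cmult) (auto simp: nn_integral_powr_Ioi)
  also have "\<dots> = top" using p by (simp add: ennreal_mult_top)
  finally show ?thesis using top by simp
qed

lemma nn_integral_powr_below:
  assumes p: "1 \<le> p"
  shows "(\<integral>\<^sup>+ t. ennreal (t powr (p - 1)) * indicator {t. 0 < t \<and> ennreal t < D} t \<partial>lborel)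
     = ennreal (1 / p) * enn_powr D p"
proof -
  have "enn_powr D p = (\<integral>\<^sup>+ t. ennreal p * (ennreal (t powr (p - 1)) * indicator {t. 0 < t \<and> ennreal t < D} t) \<partial>lborel)"
    unfolding layer_cake_powr[OF p] using p
    by (intro nn_integral_cong) (auto simp: ennreal_mult mult.assoc)
  also have "\<dots> = ennreal p * (\<integral>\<^sup>+ t. ennreal (t powr (p - 1)) * indicator {t. 0 < t \<and> ennreal t < D} t \<partial>lborel)"
    by (subst nn_integral_cmult) auto
  finally have "ennreal (1 / p) * enn_powr D p = ennreal (1/p) * ennreal p * (\<integral>\<^sup>+ t. ennreal (t powr (p - 1)) * indicator {t. 0 < t \<and> ennreal t < D} t \<partial>lborel)"
    by (simp add: mult.assoc)
  also have "ennreal (1/p) * ennreal p = 1" using p by (simp add: ennreal_mult[symmetric] del: ennreal_mult)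
  finally show ?thesis by simp
qed

lemma nn_integral_powr_below_le:
  assumes p: "1 \<le> p"
  shows "(\<integral>\<^sup>+ t. ennreal (t powr (p - 1)) * indicator {t. 0 < t \<and> ennreal t \<le> D} t \<partial>lborel)
     = ennreal (1 / p) * enn_powr D p"
proof -
  have "(\<integral>\<^sup>+ t. ennreal (t powr (p - 1)) * indicator {t. 0 < t \<and> ennreal t \<le> D} t \<partial>lborel)
     = (\<integral>\<^sup>+ t. ennreal (t powr (p - 1)) * indicator {t. 0 < t \<and> ennreal t < D} t \<partial>lborel)"
  proof (cases D rule: ennreal_cases)
    case (real a)
    show ?thesis
      apply (intro nn_integral_cong_AE)
      using AE_lborel_singleton[of a]
      apply eventually_elim
      using real by (auto simp: indicator_def ennreal_less_iff ennreal_le_iff2 less_le)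
  next
    case top then show ?thesis by (intro nn_integral_cong) (auto simp: indicator_def)
  qed
  then show ?thesis using nn_integral_powr_below[OF p] by simp
qed


context wsetup begin

lemma Wr_mono': "mono Wr" unfolding mono_def using Wr_mono by auto

lemma Wr_meas[measurable]: "Wr \<in> borel_measurable borel"
  using borel_measurable_mono[OF Wr_mono'] .

lemma WW_eq: "enn_powr (Wfun w s) p = ennreal (Wr s powr p)"
  by (simp add: Wfun_Wr enn_powr_ennreal Wr_nonneg)

definition nu :: "real set \<Rightarrow> ennreal" where
  "nu E = (\<integral>\<^sup>+ s\<in>E. ennreal (w s) \<partial>lborel)"

definition initial :: "real set \<Rightarrow> bool" where
  "initial E \<longleftrightarrow> E \<subseteq> {0<..} \<and> (\<forall>x\<in>E. \<forall>y. 0 < y \<and> y \<le> x \<longrightarrow> y \<in> E)"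

lemma initial_interval: "initial E \<Longrightarrow> is_interval E"
  unfolding initial_def is_interval_1 by (metis subsetD greaterThan_iff order.strict_trans2)

lemma initial_sets: "initial E \<Longrightarrow> E \<in> sets borel"
  using initial_interval real_interval_borel_measurable by blast

lemma Wfun_nu: "Wfun w t = nu {0<..<t}"
  unfolding Wfun_def nu_def ..

lemma nu_mono: "A \<subseteq> B \<Longrightarrow> nu A \<le> nu B"
  unfolding nu_def by (intro nn_integral_mono) (auto simp: indicator_def)

lemma IVT_bound:
  assumes a: "0 < a"
  shows "enn_powr (ennreal (Wr a / 2)) q \<le> (\<integral>\<^sup>+ s\<in>{0<..<a}. enn_powr (Wfun w s) (q - 1) * ennreal (w s) \<partial>lborel)"
proof -
  define c where "c = Wr a / 2"
  have c0: "0 \<le> c" unfolding c_def using Wr_nonneg by auto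
  obtain b where b: "0 \<le> b" "b \<le> a" "\<And>s. b < s \<Longrightarrow> c \<le> Wr s" "c \<le> Wr a - Wr b"
  proof (cases "\<exists>s0. 0 < s0 \<and> s0 \<le> a \<and> Wr s0 \<le> c")
    case True
    then obtain s0 where s0: "0 < s0" "s0 \<le> a" "Wr s0 \<le> c" by auto
    have "continuous_on {s0..a} Wr"
      using s0 by (intro continuous_at_imp_continuous_on ballI Wr_cont) auto
    moreover have "c \<le> Wr a" unfolding c_def using Wr_nonneg[of a] by auto
    ultimately obtain b where bb: "s0 \<le> b" "b \<le> a" "Wr b = c"
      using IVT'[of Wr s0 c a] s0 by auto
    show ?thesis
    proof (rule that[of b])
      show "0 \<le> b" using bb s0 by auto
      show "b \<le> a" using bb by auto
      show "c \<le> Wr s" if "b < s" for s using Wr_mono[of b s] that bb by auto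
      show "c \<le> Wr a - Wr b" using bb unfolding c_def by auto
    qed
  next
    case False
    have "c \<le> Wr s" if s: "0 < s" for s
    proof (cases "s \<le> a")
      case True then show ?thesis using False s by force
    next
      case F2: False
      have "c < Wr a" using False a by force
      then show ?thesis using Wr_mono[of a s] F2 by auto
    qed
    then show ?thesis using that[of 0] a Wr_zero[of 0] unfolding c_def by auto
  qed
  have "ennreal (c powr q) = ennreal (c powr (q - 1)) * ennreal c"
  proof (cases "c = 0")
    case False
    then have "c powr (q - 1) * c = c powr q" using c0 powr_add[of c "q - 1" 1] by simp
    then show ?thesis using c0 by (simp add: ennreal_mult[symmetric] del: ennreal_mult)
  qed simp
  also have "\<dots> \<le> ennreal (c powr (q - 1)) * ennreal (Wr a - Wr b)"
    using b by (intro mult_left_mono ennreal_leI) auto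
  also have "\<dots> = (\<integral>\<^sup>+ s. ennreal (c powr (q - 1)) * (ennreal (w s) * indicator {b<..<a} s) \<partial>lborel)"
    using b by (subst nn_integral_cmult) (auto simp: Wr_split)
  also have "\<dots> \<le> (\<integral>\<^sup>+ s\<in>{0<..<a}. enn_powr (Wfun w s) (q - 1) * ennreal (w s) \<partial>lborel)"
  proof (intro nn_integral_mono)
    fix s
    show "ennreal (c powr (q - 1)) * (ennreal (w s) * indicator {b<..<a} s)
      \<le> enn_powr (Wfun w s) (q - 1) * ennreal (w s) * indicator {0<..<a} s"
    proof (cases "b < s \<and> s < a")
      case True
      then have "c powr (q - 1) \<le> Wr s powr (q - 1)" using b c0 q1 by (intro powr_mono2) auto
      then have "ennreal (c powr (q - 1)) \<le> enn_powr (Wfun w s) (q - 1)" by (simp add: WW_eq)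
      then show ?thesis using True b by (auto simp: indicator_def intro: mult_right_mono)
    qed (auto simp: indicator_def)
  qed
  finally show ?thesis unfolding c_def using Wr_nonneg[of a] by (simp add: enn_powr_ennreal)
qed

lemma initial_upper:
  assumes E: "initial E"
  shows "(\<integral>\<^sup>+ s\<in>E. enn_powr (Wfun w s) (q - 1) * ennreal (w s) \<partial>lborel) \<le> enn_powr (nu E) q"
proof -
  have Em: "E \<in> sets borel" using initial_sets[OF E] .
  have "(\<integral>\<^sup>+ s\<in>E. enn_powr (Wfun w s) (q - 1) * ennreal (w s) \<partial>lborel)
     \<le> (\<integral>\<^sup>+ s. enn_powr (nu E) (q - 1) * (ennreal (w s) * indicator E s) \<partial>lborel)"
  proof (intro nn_integral_mono)
    fix s
    show "enn_powr (Wfun w s) (q - 1) * ennreal (w s) * indicator E s \<le> enn_powr (nu E) (q - 1) * (ennreal (w s) * indicator E s)"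
    proof (cases "s \<in> E")
      case True
      have "{0<..<s} \<subseteq> E" using E True unfolding initial_def by auto
      then have "Wfun w s \<le> nu E" unfolding Wfun_nu by (rule nu_mono)
      then have "enn_powr (Wfun w s) (q - 1) \<le> enn_powr (nu E) (q - 1)" using q1 by (intro enn_powr_mono) auto
      then show ?thesis using True by (auto simp: indicator_def intro: mult_right_mono)
    qed (auto simp: indicator_def)
  qed
  also have "\<dots> = enn_powr (nu E) (q - 1) * nu E"
    unfolding nu_def using Em by (subst nn_integral_cmult) auto
  also have "\<dots> = enn_powr (nu E) q" using enn_powr_add[of "q - 1" 1 "nu E"] q1 by simp
  finally show ?thesis .
qed

lemma nu_Ioc: "0 \<le> a \<Longrightarrow> nu {0<..a} = Wfun w a"
  unfolding Wfun_nu nu_def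
  apply (intro nn_integral_cong_AE)
  using AE_lborel_singleton[of a]
  by eventually_elim (auto simp: indicator_def)

lemma nu_Ioi: "nu {0<..} = (SUP n::nat. Wfun w (real n))"
proof -
  have "nu {0<..} = (\<integral>\<^sup>+ s. (SUP n::nat. ennreal (w s) * indicator {0<..<real n} s) \<partial>lborel)"
    unfolding nu_def
  proof (intro nn_integral_cong)
    fix s :: real
    show "ennreal (w s) * indicator {0<..} s = (SUP n::nat. ennreal (w s) * indicator {0<..<real n} s)"
    proof (rule antisym)
      show "(SUP n::nat. ennreal (w s) * indicator {0<..<real n} s) \<le> ennreal (w s) * indicator {0<..} s"
        by (intro SUP_least) (auto simp: indicator_def)
      obtain n :: nat where "s < real n" using reals_Archimedean2 by auto
      then show "ennreal (w s) * indicator {0<..} s \<le> (SUP n::nat. ennreal (w s) * indicator {0<..<real n} s)"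
        by (intro SUP_upper2[of n]) (auto simp: indicator_def)
    qed
  qed
  also have "\<dots> = (SUP n::nat. \<integral>\<^sup>+ s. ennreal (w s) * indicator {0<..<real n} s \<partial>lborel)"
    by (intro nn_integral_monotone_convergence_SUP) (auto simp: incseq_def le_fun_def indicator_def)
  finally show ?thesis unfolding Wfun_def .
qed

lemma initial_lower:
  assumes E: "initial E"
  shows "enn_powr (nu E) q \<le> ennreal (2 powr q) * (\<integral>\<^sup>+ s\<in>E. enn_powr (Wfun w s) (q - 1) * ennreal (w s) \<partial>lborel)"
proof -
  let ?I = "\<lambda>E. (\<integral>\<^sup>+ s\<in>E. enn_powr (Wfun w s) (q - 1) * ennreal (w s) \<partial>lborel)"
  have key: "enn_powr (Wfun w a) q \<le> ennreal (2 powr q) * ?I E" if "0 < a" "{0<..<a} \<subseteq> E" for a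
  proof -
    have "enn_powr (Wfun w a) q = ennreal (2 powr q) * enn_powr (ennreal (Wr a / 2)) q"
      using Wr_nonneg[of a] by (simp add: Wfun_Wr enn_powr_ennreal ennreal_mult[symmetric] powr_divide del: ennreal_mult)
    also have "\<dots> \<le> ennreal (2 powr q) * ?I {0<..<a}" by (intro mult_left_mono IVT_bound that) auto
    also have "\<dots> \<le> ennreal (2 powr q) * ?I E"
      using that by (intro mult_left_mono nn_integral_mono) (auto simp: indicator_def)
    finally show ?thesis .
  qed
  consider "E = {}" | "\<not> bdd_above E" | "E \<noteq> {}" "bdd_above E" by auto
  then show ?thesis
  proof cases
    case 1 then show ?thesis by (simp add: nu_def)
  next
    case 2
    then have "E = {0<..}" using E unfolding initial_def bdd_above_def
      by (auto simp: not_le) (meson less_imp_le)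
    then have "nu E = (SUP n::nat. Wfun w (real n))" using nu_Ioi by simp
    then have "enn_powr (nu E) q = (SUP n::nat. enn_powr (Wfun w (real n)) q)"
      using q1 by (simp add: enn_powr_SUP image_image)
    also have "\<dots> \<le> ennreal (2 powr q) * ?I E"
    proof (intro SUP_least)
      fix n :: nat
      show "enn_powr (Wfun w (real n)) q \<le> ennreal (2 powr q) * ?I E"
      proof (cases "n = 0")
        case True then show ?thesis by (simp add: Wfun_def)
      next
        case False
        have "{0<..<real n} \<subseteq> E" using \<open>E = {0<..}\<close> by auto
        then show ?thesis using key[of "real n"] False by auto
      qed
    qed
    finally show ?thesis .
  next
    case 3
    define a where "a = Sup E"
    have Epos: "E \<subseteq> {0<..}" using E unfolding initial_def by auto
    obtain x where x: "x \<in> E" using 3 by auto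
    have a0: "0 < a" unfolding a_def using x Epos 3 by (meson cSup_upper greaterThan_iff less_le_trans subsetD)
    have sub: "{0<..<a} \<subseteq> E"
    proof
      fix y assume y: "y \<in> {0<..<a}"
      then obtain z where "z \<in> E" "y < z" unfolding a_def using less_cSup_iff[OF 3(1) 3(2)] by auto
      then show "y \<in> E" using E y unfolding initial_def by auto
    qed
    have sup: "E \<subseteq> {0<..a}" unfolding a_def using Epos 3 by (auto intro: cSup_upper)
    have "nu E \<le> Wfun w a" using nu_mono[OF sup] nu_Ioc[of a] a0 by simp
    then have "enn_powr (nu E) q \<le> enn_powr (Wfun w a) q" using q1 by (intro enn_powr_mono) auto
    also have "\<dots> \<le> ennreal (2 powr q) * ?I E" using key[OF a0 sub] .
    finally show ?thesis .
  qed
qed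

end

lemma antitone_meas:
  fixes G :: "real \<Rightarrow> ennreal"
  assumes "\<And>x y. x \<le> y \<Longrightarrow> G y \<le> G x"
  shows "G \<in> borel_measurable borel"
proof (rule borel_measurableI_greater)
  fix y :: ennreal
  have "is_interval {x. y < G x}"
    unfolding is_interval_1 using assms by (auto intro: less_le_trans)
  then show "{x \<in> space borel. y < G x} \<in> sets borel"
    using real_interval_borel_measurable by auto
qed

lemma layer_swap:
  fixes h G :: "real \<Rightarrow> ennreal" and p :: real
  assumes p: "1 \<le> p" and [measurable]: "h \<in> borel_measurable borel" "G \<in> borel_measurable borel"
  shows "(\<integral>\<^sup>+ s. h s * enn_powr (G s) p \<partial>lborel)
    = (\<integral>\<^sup>+ m. ennreal (p * m powr (p - 1)) * indicator {0<..} m *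
          (\<integral>\<^sup>+ s. h s * indicator {s. ennreal m < G s} s \<partial>lborel) \<partial>lborel)"
proof -
  have "(\<integral>\<^sup>+ s. h s * enn_powr (G s) p \<partial>lborel)
     = (\<integral>\<^sup>+ s. (\<integral>\<^sup>+ m. h s * (ennreal (p * m powr (p - 1)) * (if 0 < m \<and> ennreal m < G s then 1 else 0)) \<partial>lborel) \<partial>lborel)"
  proof (intro nn_integral_cong)
    fix s
    have "enn_powr (G s) p = (\<integral>\<^sup>+ m. ennreal (p * m powr (p - 1)) * (if 0 < m \<and> ennreal m < G s then 1 else 0) \<partial>lborel)"
      unfolding layer_cake_powr[OF p] by (intro nn_integral_cong) (auto simp: indicator_def)
    then show "h s * enn_powr (G s) p = (\<integral>\<^sup>+ m. h s * (ennreal (p * m powr (p - 1)) * (if 0 < m \<and> ennreal m < G s then 1 else 0)) \<partial>lborel)"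
      by (simp add: nn_integral_cmult)
  qed
  also have "\<dots> = (\<integral>\<^sup>+ m. (\<integral>\<^sup>+ s. h s * (ennreal (p * m powr (p - 1)) * (if 0 < m \<and> ennreal m < G s then 1 else 0)) \<partial>lborel) \<partial>lborel)"
    by (rule lborel_pair.Fubini'[symmetric]) measurable
  also have "\<dots> = (\<integral>\<^sup>+ m. ennreal (p * m powr (p - 1)) * indicator {0<..} m *
          (\<integral>\<^sup>+ s. h s * indicator {s. ennreal m < G s} s \<partial>lborel) \<partial>lborel)"
  proof (intro nn_integral_cong)
    fix m :: real
    have "(\<integral>\<^sup>+ s. h s * (ennreal (p * m powr (p - 1)) * (if 0 < m \<and> ennreal m < G s then 1 else 0)) \<partial>lborel)
      = (\<integral>\<^sup>+ s. (ennreal (p * m powr (p - 1)) * indicator {0<..} m) * (h s * indicator {s. ennreal m < G s} s) \<partial>lborel)"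
      by (intro nn_integral_cong) (auto simp: indicator_def mult_ac)
    also have "\<dots> = ennreal (p * m powr (p - 1)) * indicator {0<..} m * (\<integral>\<^sup>+ s. h s * indicator {s. ennreal m < G s} s \<partial>lborel)"
      by (intro nn_integral_cmult) measurable
    finally show "(\<integral>\<^sup>+ s. h s * (ennreal (p * m powr (p - 1)) * (if 0 < m \<and> ennreal m < G s then 1 else 0)) \<partial>lborel)
      = ennreal (p * m powr (p - 1)) * indicator {0<..} m * (\<integral>\<^sup>+ s. h s * indicator {s. ennreal m < G s} s \<partial>lborel)" .
  qed
  finally show ?thesis .
qed


context wsetup begin

definition Lev :: "(real \<Rightarrow> ennreal) \<Rightarrow> ennreal \<Rightarrow> real set" where
  "Lev g s = {x. 0 < x \<and> s < g x}"

lemma initial_Lev: "decp g \<Longrightarrow> initial (Lev g s)"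
  unfolding initial_def Lev_def by (auto intro: less_le_trans decpD)

lemma Lev_anti: "s \<le> s' \<Longrightarrow> Lev g s' \<subseteq> Lev g s"
  unfolding Lev_def by (auto intro: le_less_trans)

lemma space_wm: "space (wmeasure w) = {0<..}"
  unfolding wmeasure_def by (simp add: space_restrict_space)

lemma wm_emeasure:
  assumes g: "decp g"
  shows "emeasure (wmeasure w) {x \<in> space (wmeasure w). s < g x} = nu (Lev g s)"
proof -
  have eq: "{x \<in> space (wmeasure w). s < g x} = Lev g s" unfolding space_wm Lev_def by auto
  have Ls: "Lev g s \<in> sets borel" using initial_sets[OF initial_Lev[OF g]] .
  have om: "{0::real<..} \<inter> space lborel \<in> sets lborel" by (simp add: greaterThan_borel)
  have Lsr: "Lev g s \<in> sets (restrict_space lborel {0<..})"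
    using Ls by (subst sets_restrict_space_iff[OF om]) (auto simp: Lev_def)
  have wm: "(\<lambda>t. ennreal (w t)) \<in> borel_measurable (restrict_space lborel {0<..})"
    by (intro measurable_restrict_space1) measurable
  have "emeasure (wmeasure w) (Lev g s) = (\<integral>\<^sup>+ x. ennreal (w x) * indicator (Lev g s) x \<partial>restrict_space lborel {0<..})"
    unfolding wmeasure_def using wm Lsr by (rule emeasure_density)
  also have "\<dots> = (\<integral>\<^sup>+ x. ennreal (w x) * indicator (Lev g s) x * indicator {0<..} x \<partial>lborel)"
    by (rule nn_integral_restrict_space[OF om])
  also have "\<dots> = nu (Lev g s)" unfolding nu_def
    by (intro nn_integral_cong) (auto simp: indicator_def Lev_def)
  finally show ?thesis using eq by simp
qed

lemma rearr_eq: "decp g \<Longrightarrow> rearr (wmeasure w) g t = Inf {s. nu (Lev g s) \<le> ennreal t}"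
  unfolding rearr_def by (simp add: wm_emeasure)

lemma rearr_anti: "t \<le> t' \<Longrightarrow> rearr M g t' \<le> rearr M g t"
  unfolding rearr_def by (intro Inf_superset_mono) (auto intro: order_trans ennreal_leI)

lemma rearr_upper:
  assumes g: "decp g" and m: "m < rearr (wmeasure w) g t"
  shows "ennreal t < nu (Lev g m)"
proof (rule ccontr)
  assume "\<not> ennreal t < nu (Lev g m)"
  then have "m \<in> {s. nu (Lev g s) \<le> ennreal t}" by (simp add: not_less)
  then have "rearr (wmeasure w) g t \<le> m" unfolding rearr_eq[OF g] by (rule Inf_lower)
  then show False using m by simp
qed

lemma rearr_lower:
  assumes g: "decp g" and m: "0 < m" and t: "ennreal t < nu (Lev g (ennreal (2 * m)))"
  shows "ennreal m < rearr (wmeasure w) g t"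
proof -
  have "ennreal (2 * m) \<le> rearr (wmeasure w) g t"
    unfolding rearr_eq[OF g]
  proof (intro Inf_greatest)
    fix s assume s: "s \<in> {s. nu (Lev g s) \<le> ennreal t}"
    show "ennreal (2 * m) \<le> s"
    proof (rule ccontr)
      assume "\<not> ennreal (2 * m) \<le> s"
      then have "s \<le> ennreal (2 * m)" by simp
      then have "nu (Lev g (ennreal (2 * m))) \<le> nu (Lev g s)" by (intro nu_mono Lev_anti)
      then show False using s t by simp
    qed
  qed
  moreover have "ennreal m < ennreal (2 * m)" using m by (simp add: ennreal_less_iff)
  ultimately show ?thesis by simp
qed

definition Lq :: "(real \<Rightarrow> ennreal) \<Rightarrow> ennreal" where
  "Lq g = (\<integral>\<^sup>+ t\<in>{0<..}. ennreal (t powr (q - 1)) * enn_powr (rearr (wmeasure w) g t) q \<partial>lborel)"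

definition Rq :: "(real \<Rightarrow> ennreal) \<Rightarrow> ennreal" where
  "Rq g = (\<integral>\<^sup>+ t\<in>{0<..}. enn_powr (g t) q * enn_powr (Wfun w t) (q - 1) * ennreal (w t) \<partial>lborel)"

definition Rm :: "(real \<Rightarrow> ennreal) \<Rightarrow> real \<Rightarrow> ennreal" where
  "Rm g m = (\<integral>\<^sup>+ s\<in>Lev g (ennreal m). enn_powr (Wfun w s) (q - 1) * ennreal (w s) \<partial>lborel)"

definition Dm :: "(real \<Rightarrow> ennreal) \<Rightarrow> real \<Rightarrow> ennreal" where
  "Dm g m = nu (Lev g (ennreal m))"

lemma Dm_meas[measurable]: "Dm g \<in> borel_measurable borel"
  by (rule antitone_meas) (auto simp: Dm_def intro!: nu_mono Lev_anti ennreal_leI)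

lemma Dmq_meas[measurable]: "(\<lambda>m. enn_powr (Dm g m) q) \<in> borel_measurable borel"
  using q1 by (intro antitone_meas enn_powr_mono) (auto simp: Dm_def intro!: nu_mono Lev_anti ennreal_leI)

lemma Rm_meas[measurable]: "Rm g \<in> borel_measurable borel"
  unfolding Rm_def by (rule antitone_meas, intro nn_integral_mono) (auto simp: indicator_def Lev_def intro: le_less_trans ennreal_leI)

lemma WWw_meas[measurable]: "(\<lambda>s. enn_powr (Wfun w s) (q - 1) * ennreal (w s)) \<in> borel_measurable borel"
  by (simp add: WW_eq)

lemma Lq_layer:
  assumes g: "decp g"
  shows "Lq g = (\<integral>\<^sup>+ m. ennreal (q * m powr (q - 1)) * indicator {0<..} m *
     (\<integral>\<^sup>+ t. ennreal (t powr (q - 1)) * indicator {0<..} t * indicator {t. ennreal m < rearr (wmeasure w) g t} t \<partial>lborel) \<partial>lborel)"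
proof -
  have G: "rearr (wmeasure w) g \<in> borel_measurable borel" by (intro antitone_meas rearr_anti)
  have "Lq g = (\<integral>\<^sup>+ t. (ennreal (t powr (q - 1)) * indicator {0<..} t) * enn_powr (rearr (wmeasure w) g t) q \<partial>lborel)"
    unfolding Lq_def by (intro nn_integral_cong) (auto simp: mult_ac)
  also have "\<dots> = (\<integral>\<^sup>+ m. ennreal (q * m powr (q - 1)) * indicator {0<..} m *
     (\<integral>\<^sup>+ t. ennreal (t powr (q - 1)) * indicator {0<..} t * indicator {t. ennreal m < rearr (wmeasure w) g t} t \<partial>lborel) \<partial>lborel)"
    using q1 G by (intro layer_swap) auto
  finally show ?thesis .
qed

lemma Rq_layer:
  assumes g: "decp g"
  shows "Rq g = (\<integral>\<^sup>+ m. ennreal (q * m powr (q - 1)) * indicator {0<..} m * Rm g m \<partial>lborel)"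
proof -
  have G: "(\<lambda>x. g x * indicator {0<..} x) \<in> borel_measurable borel" using decp_meas0[OF g] .
  have "Rq g = (\<integral>\<^sup>+ t. (enn_powr (Wfun w t) (q - 1) * ennreal (w t) * indicator {0<..} t) * enn_powr (g t * indicator {0<..} t) q \<partial>lborel)"
    unfolding Rq_def by (intro nn_integral_cong) (auto simp: mult_ac indicator_def)
  also have "\<dots> = (\<integral>\<^sup>+ m. ennreal (q * m powr (q - 1)) * indicator {0<..} m *
     (\<integral>\<^sup>+ t. (enn_powr (Wfun w t) (q - 1) * ennreal (w t) * indicator {0<..} t) * indicator {t. ennreal m < g t * indicator {0<..} t} t \<partial>lborel) \<partial>lborel)"
    using q1 G by (intro layer_swap) auto
  also have "\<dots> = (\<integral>\<^sup>+ m. ennreal (q * m powr (q - 1)) * indicator {0<..} m * Rm g m \<partial>lborel)"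
  proof (intro nn_integral_cong)
    fix m :: real
    have "(\<integral>\<^sup>+ t. (enn_powr (Wfun w t) (q - 1) * ennreal (w t) * indicator {0<..} t) * indicator {t. ennreal m < g t * indicator {0<..} t} t \<partial>lborel) = Rm g m"
      unfolding Rm_def by (intro nn_integral_cong) (auto simp: indicator_def Lev_def)
    then show "ennreal (q * m powr (q - 1)) * indicator {0<..} m *
     (\<integral>\<^sup>+ t. (enn_powr (Wfun w t) (q - 1) * ennreal (w t) * indicator {0<..} t) * indicator {t. ennreal m < g t * indicator {0<..} t} t \<partial>lborel)
      = ennreal (q * m powr (q - 1)) * indicator {0<..} m * Rm g m" by simp
  qed
  finally show ?thesis .
qed

lemma Rm_bounds:
  assumes g: "decp g"
  shows "Rm g m \<le> enn_powr (Dm g m) q" "enn_powr (Dm g m) q \<le> ennreal (2 powr q) * Rm g m"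
  unfolding Rm_def Dm_def using initial_upper initial_lower initial_Lev[OF g] by auto

lemma L_le_R:
  assumes g: "decp g"
  shows "Lq g \<le> ennreal (2 powr q / q) * Rq g"
proof -
  have "Lq g \<le> (\<integral>\<^sup>+ m. ennreal (q * m powr (q - 1)) * indicator {0<..} m * (ennreal (1 / q) * enn_powr (Dm g m) q) \<partial>lborel)"
    unfolding Lq_layer[OF g]
  proof (intro nn_integral_mono mult_left_mono)
    fix m :: real
    have "(\<integral>\<^sup>+ t. ennreal (t powr (q - 1)) * indicator {0<..} t * indicator {t. ennreal m < rearr (wmeasure w) g t} t \<partial>lborel)
       \<le> (\<integral>\<^sup>+ t. ennreal (t powr (q - 1)) * indicator {t. 0 < t \<and> ennreal t < Dm g m} t \<partial>lborel)"
      by (intro nn_integral_mono) (auto simp: indicator_def Dm_def dest: rearr_upper[OF g])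
    also have "\<dots> = ennreal (1 / q) * enn_powr (Dm g m) q" using q1 by (intro nn_integral_powr_below) auto
    finally show "(\<integral>\<^sup>+ t. ennreal (t powr (q - 1)) * indicator {0<..} t * indicator {t. ennreal m < rearr (wmeasure w) g t} t \<partial>lborel)
       \<le> ennreal (1 / q) * enn_powr (Dm g m) q" .
  qed auto
  also have "\<dots> \<le> (\<integral>\<^sup>+ m. ennreal (2 powr q / q) * (ennreal (q * m powr (q - 1)) * indicator {0<..} m * Rm g m) \<partial>lborel)"
  proof (intro nn_integral_mono)
    fix m
    have "ennreal (1 / q) * enn_powr (Dm g m) q \<le> ennreal (1 / q) * (ennreal (2 powr q) * Rm g m)"
      by (intro mult_left_mono Rm_bounds[OF g]) auto
    also have "\<dots> = ennreal (2 powr q / q) * Rm g m"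
      using q1 by (simp add: mult.assoc[symmetric] ennreal_mult[symmetric] del: ennreal_mult)
    finally have A: "ennreal (1 / q) * enn_powr (Dm g m) q \<le> ennreal (2 powr q / q) * Rm g m" .
    then have "ennreal (q * m powr (q - 1)) * indicator {0<..} m * (ennreal (1 / q) * enn_powr (Dm g m) q)
      \<le> ennreal (q * m powr (q - 1)) * indicator {0<..} m * (ennreal (2 powr q / q) * Rm g m)"
      by (intro mult_left_mono) auto
    then show "ennreal (q * m powr (q - 1)) * indicator {0<..} m * (ennreal (1 / q) * enn_powr (Dm g m) q)
      \<le> ennreal (2 powr q / q) * (ennreal (q * m powr (q - 1)) * indicator {0<..} m * Rm g m)"
      by (simp add: mult_ac)
  qed
  also have "\<dots> = ennreal (2 powr q / q) * Rq g"
    unfolding Rq_layer[OF g] by (intro nn_integral_cmult) measurable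
  finally show ?thesis .
qed

end

context wsetup begin

lemma R_le_L:
  assumes g: "decp g"
  shows "Rq g \<le> ennreal (q * 2 powr q) * Lq g"
proof -
  define X where "X = (\<lambda>u. ennreal (q * u powr (q - 1)) * indicator {0<..} u * enn_powr (Dm g u) q)"
  define Y where "Y = (\<integral>\<^sup>+ m. ennreal (q * m powr (q - 1)) * indicator {0<..} m * enn_powr (Dm g (2 * m)) q \<partial>lborel)"
  have Xm[measurable]: "X \<in> borel_measurable borel" unfolding X_def by measurable
  have "Rq g \<le> (\<integral>\<^sup>+ u. X u \<partial>lborel)"
    unfolding Rq_layer[OF g] X_def
    by (intro nn_integral_mono mult_left_mono Rm_bounds[OF g]) auto
  also have "(\<integral>\<^sup>+ u. X u \<partial>lborel) = ennreal 2 * (\<integral>\<^sup>+ m. X (0 + 2 * m) \<partial>lborel)"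
    using nn_integral_real_affine[OF Xm, of 2 0] by simp
  also have "(\<integral>\<^sup>+ m. X (0 + 2 * m) \<partial>lborel) = (\<integral>\<^sup>+ m. ennreal (2 powr (q - 1)) * (ennreal (q * m powr (q - 1)) * indicator {0<..} m * enn_powr (Dm g (2 * m)) q) \<partial>lborel)"
  proof (intro nn_integral_cong)
    fix m :: real
    show "X (0 + 2 * m) = ennreal (2 powr (q - 1)) * (ennreal (q * m powr (q - 1)) * indicator {0<..} m * enn_powr (Dm g (2 * m)) q)"
    proof (cases "0 < m")
      case True
      have "(2 * m) powr (q - 1) = 2 powr (q - 1) * m powr (q - 1)" using True by (simp add: powr_mult)
      then have "ennreal (q * (2 * m) powr (q - 1)) = ennreal (2 powr (q - 1)) * ennreal (q * m powr (q - 1))"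
        using q1 True by (simp add: ennreal_mult[symmetric] mult_ac del: ennreal_mult)
      then show ?thesis unfolding X_def using True by (simp add: mult_ac)
    qed (simp add: X_def)
  qed
  also have "\<dots> = ennreal (2 powr (q - 1)) * Y"
    unfolding Y_def by (intro nn_integral_cmult) measurable
  finally have RY: "Rq g \<le> ennreal (2 powr q) * Y"
  proof -
    assume "Rq g \<le> ennreal 2 * (ennreal (2 powr (q - 1)) * Y)"
    moreover have "ennreal 2 * (ennreal (2 powr (q - 1)) * Y) = ennreal (2 powr q) * Y"
    proof -
      have "2 * 2 powr (q - 1) = (2::real) powr q" using powr_add[of 2 1 "q - 1"] by simp
      then have "ennreal 2 * ennreal (2 powr (q - 1)) = ennreal (2 powr q)"
        using ennreal_mult[of 2 "2 powr (q - 1)"] by simp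
      then show ?thesis by (simp add: mult.assoc[symmetric])
    qed
    ultimately show ?thesis by simp
  qed
  have LY: "ennreal (1 / q) * Y \<le> Lq g"
  proof -
    have "ennreal (1 / q) * Y = (\<integral>\<^sup>+ m. ennreal (q * m powr (q - 1)) * indicator {0<..} m * (ennreal (1 / q) * enn_powr (Dm g (2 * m)) q) \<partial>lborel)"
      unfolding Y_def by (subst nn_integral_cmult[symmetric]) (measurable, intro nn_integral_cong, simp add: mult_ac)
    also have "\<dots> \<le> Lq g"
      unfolding Lq_layer[OF g]
    proof (intro nn_integral_mono)
      fix m :: real
      show "ennreal (q * m powr (q - 1)) * indicator {0<..} m * (ennreal (1 / q) * enn_powr (Dm g (2 * m)) q)
        \<le> ennreal (q * m powr (q - 1)) * indicator {0<..} m *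
          (\<integral>\<^sup>+ t. ennreal (t powr (q - 1)) * indicator {0<..} t * indicator {t. ennreal m < rearr (wmeasure w) g t} t \<partial>lborel)"
      proof (cases "0 < m")
        case True
        have "ennreal (1 / q) * enn_powr (Dm g (2 * m)) q = (\<integral>\<^sup>+ t. ennreal (t powr (q - 1)) * indicator {t. 0 < t \<and> ennreal t < Dm g (2 * m)} t \<partial>lborel)"
          using q1 by (intro nn_integral_powr_below[symmetric]) auto
        also have "\<dots> \<le> (\<integral>\<^sup>+ t. ennreal (t powr (q - 1)) * indicator {0<..} t * indicator {t. ennreal m < rearr (wmeasure w) g t} t \<partial>lborel)"
          using True by (intro nn_integral_mono) (auto simp: indicator_def Dm_def intro: rearr_lower[OF g])
        finally show ?thesis by (intro mult_left_mono) auto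
      qed simp
    qed
    finally show ?thesis .
  qed
  have "Rq g \<le> ennreal (2 powr q) * Y" by (rule RY)
  also have "\<dots> = ennreal (2 powr q) * ennreal q * (ennreal (1 / q) * Y)"
    using q1 by (simp add: mult.assoc[symmetric] ennreal_mult[symmetric] del: ennreal_mult)
  also have "\<dots> \<le> ennreal (2 powr q) * ennreal q * Lq g" by (intro mult_left_mono LY) auto
  also have "\<dots> = ennreal (q * 2 powr q) * Lq g" using q1 by (simp add: ennreal_mult mult_ac)
  finally show ?thesis .
qed

end

context wsetup begin

definition Phi :: "(real \<Rightarrow> ennreal) \<Rightarrow> ennreal" where "Phi f = Rq (Sop f)"

lemma Sop_ind_le: "0 < t \<Longrightarrow> t \<le> r \<Longrightarrow> Sop (indicator {0<..<r}) t = 1"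
  using Sop_ind[of t r] by simp

lemma Sop_ind_gt: "0 < r \<Longrightarrow> r < t \<Longrightarrow> Sop (indicator {0<..<r}) t = ennreal (r / t)"
  using Sop_ind[of t r] by simp

lemma Wr_tail_bound:
  assumes r: "0 < r" and t: "r < t"
  shows "(r / t) powr q * Wr t powr (q - 1) \<le> r * Wr r powr (q - 1) / t"
proof -
  have Wt: "Wr t \<le> t / r * Wr r" using Wr_concave[of r t] r t by (simp add: field_simps)
  have p1: "(t / r * Wr r) powr (q - 1) = (t / r) powr (q - 1) * Wr r powr (q - 1)"
    using r t Wr_nonneg[of r] by (intro powr_mult)
  have p3: "(r / t) powr q * (t / r) powr q = 1"
  proof -
    have "(r / t) powr q * (t / r) powr q = ((r / t) * (t / r)) powr q"
      using r t by (intro powr_mult[symmetric])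
    also have "(r / t) * (t / r) = 1" using r t by simp
    finally show ?thesis by simp
  qed
  have p2: "(r / t) powr q * (t / r) powr (q - 1) = r / t"
  proof -
    have "(t / r) powr (q - 1) = (t / r) powr q / (t / r)"
      using r t powr_diff[of "t / r" q 1] by simp
    then have "(r / t) powr q * (t / r) powr (q - 1) = ((r / t) powr q * (t / r) powr q) / (t / r)" by simp
    also have "\<dots> = r / t" using p3 by simp
    finally show ?thesis .
  qed
  have "(r / t) powr q * Wr t powr (q - 1) \<le> (r / t) powr q * (t / r * Wr r) powr (q - 1)"
    using Wt q1 Wr_nonneg by (intro mult_left_mono powr_mono2) auto
  also have "\<dots> = ((r / t) powr q * (t / r) powr (q - 1)) * Wr r powr (q - 1)"
    unfolding p1 by (simp add: mult.assoc)
  also have "\<dots> = r * Wr r powr (q - 1) / t" unfolding p2 by simp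
  finally show ?thesis .
qed

lemma ennreal_mult3: "0 \<le> a \<Longrightarrow> 0 \<le> b \<Longrightarrow> 0 \<le> c \<Longrightarrow> ennreal a * (ennreal b * ennreal c) = ennreal (a * b * c)"
  by (simp add: ennreal_mult mult.assoc)

lemma B1_imp_P:
  assumes "B1 w"
  shows "\<exists>C. \<forall>r>0. Phi (indicator {0<..<r}) \<le> ennreal C * enn_powr (Wfun w r) q"
proof -
  obtain C0 where C0: "\<And>r. r > 0 \<Longrightarrow> (\<integral>\<^sup>+ s \<in> {r<..}. ennreal (w s / s) \<partial>lborel) \<le> ennreal (C0 / r) * Wfun w r"
    using assms unfolding B1_def by auto
  define C1 where "C1 = max C0 0"
  have C1: "(\<integral>\<^sup>+ s \<in> {r<..}. ennreal (w s / s) \<partial>lborel) \<le> ennreal (C1 / r) * Wfun w r" if "r > 0" for r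
  proof -
    have "ennreal (C0 / r) * Wfun w r \<le> ennreal (C1 / r) * Wfun w r"
      using that by (intro mult_right_mono ennreal_leI divide_right_mono) (auto simp: C1_def)
    then show ?thesis using C0[OF that] by (rule order_trans[rotated])
  qed
  have "Phi (indicator {0<..<r}) \<le> ennreal (1 + C1) * enn_powr (Wfun w r) q" if r: "r > 0" for r
  proof -
    define A where "A = Wr r powr (q - 1)"
    have A0: "0 \<le> A" unfolding A_def by simp
    have "Phi (indicator {0<..<r}) \<le> (\<integral>\<^sup>+ t. ennreal A * (ennreal (w t) * indicator {0<..r} t) + ennreal (r * A) * (ennreal (w t / t) * indicator {r<..} t) \<partial>lborel)"
      unfolding Phi_def Rq_def
    proof (intro nn_integral_mono)
      fix t :: real
      show "enn_powr (Sop (indicator {0<..<r}) t) q * enn_powr (Wfun w t) (q - 1) * ennreal (w t) * indicator {0<..} t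
         \<le> ennreal A * (ennreal (w t) * indicator {0<..r} t) + ennreal (r * A) * (ennreal (w t / t) * indicator {r<..} t)"
      proof (cases "0 < t")
        case False then show ?thesis by (simp add: indicator_def)
      next
        case t0: True
        show ?thesis
        proof (cases "t \<le> r")
          case True
          have "Wr t powr (q - 1) \<le> A" unfolding A_def using True q1 Wr_nonneg by (intro powr_mono2 Wr_mono) auto
          then have "enn_powr (Wfun w t) (q - 1) \<le> ennreal A" by (simp add: WW_eq ennreal_leI)
          then show ?thesis using True t0 Sop_ind_le[OF t0 True]
            by (auto simp: indicator_def intro: mult_right_mono order_trans[OF _ add_increasing2])
        next
          case False
          have tt: "r < t" using False by simp
          have "enn_powr (Sop (indicator {0<..<r}) t) q * enn_powr (Wfun w t) (q - 1) * ennreal (w t)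
              = ennreal ((r / t) powr q * Wr t powr (q - 1) * w t)"
            using Sop_ind_gt[OF r tt] r tt w_nonneg[of t]
            by (simp add: WW_eq enn_powr_ennreal ennreal_mult)
          also have "\<dots> \<le> ennreal (r * A * (w t / t))"
          proof (intro ennreal_leI)
            have "(r / t) powr q * Wr t powr (q - 1) * w t \<le> r * A / t * w t"
              using Wr_tail_bound[OF r tt] w_nonneg[OF t0] unfolding A_def by (rule mult_right_mono)
            then show "(r / t) powr q * Wr t powr (q - 1) * w t \<le> r * A * (w t / t)" by simp
          qed
          also have "\<dots> = ennreal (r * A) * ennreal (w t / t)"
            by (rule ennreal_mult') (use r A0 in simp)
          finally show ?thesis using tt t0 r A0 w_nonneg[of t]
            by (auto simp: indicator_def)
        qed
      qed
    qed
    also have "\<dots> = ennreal A * nu {0<..r} + ennreal (r * A) * (\<integral>\<^sup>+ s \<in> {r<..}. ennreal (w s / s) \<partial>lborel)"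
      unfolding nu_def by (subst nn_integral_add) (auto simp: nn_integral_cmult)
    also have "\<dots> \<le> ennreal A * Wfun w r + ennreal (r * A) * (ennreal (C1 / r) * Wfun w r)"
      using r nu_Ioc[of r] by (intro add_mono mult_left_mono C1) auto
    also have "\<dots> = ennreal (1 + C1) * enn_powr (Wfun w r) q"
    proof -
      define B where "B = Wr r"
      have B0: "0 \<le> B" unfolding B_def by (simp add: Wr_nonneg)
      have C10: "0 \<le> C1" unfolding C1_def by simp
      have e1: "ennreal (r * A) * (ennreal (C1 / r) * ennreal B) = ennreal (r * A * (C1 / r) * B)"
        by (rule ennreal_mult3) (use r A0 C10 B0 in auto)
      have e2: "r * A * (C1 / r) * B = A * C1 * B" using r by simp
      have e3: "ennreal A * ennreal B = ennreal (A * B)" using A0 B0 by (simp add: ennreal_mult)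
      have e4: "ennreal (A * B) + ennreal (A * C1 * B) = ennreal (A * B + A * C1 * B)"
        using A0 B0 C10 by simp
      have e5: "enn_powr (Wfun w r) q = ennreal (A * B)"
      proof -
        have "B powr q = A * B"
        proof (cases "B = 0")
          case False then show ?thesis unfolding A_def B_def[symmetric] using B0 powr_add[of B "q - 1" 1] by simp
        qed (simp add: A_def B_def)
        then show ?thesis by (simp add: Wfun_Wr B_def[symmetric] enn_powr_ennreal B0)
      qed
      have e6: "ennreal (1 + C1) * ennreal (A * B) = ennreal ((1 + C1) * (A * B))"
        using C10 A0 B0 by (simp add: ennreal_mult)
      show ?thesis unfolding Wfun_Wr B_def[symmetric] e1 e2 e3 e4 e5[unfolded Wfun_Wr B_def[symmetric]] e6
        by (simp add: algebra_simps)
    qed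
    finally show ?thesis .
  qed
  then show ?thesis by blast
qed

end

lemma nn_integral_negpowr:
  assumes p: "1 < p" and a: "0 < a" and ab: "a \<le> b"
  shows "(\<integral>\<^sup>+ x. ennreal ((p - 1) * x powr (- p)) * indicator {a<..b} x \<partial>lborel) = ennreal (a powr (1 - p) - b powr (1 - p))"
proof -
  have "(\<integral>\<^sup>+ x. ennreal ((p - 1) * x powr (- p)) * indicator {a..b} x \<partial>lborel)
      = ennreal ((\<lambda>x. - (x powr (1 - p))) b - (\<lambda>x. - (x powr (1 - p))) a)"
  proof (rule nn_integral_FTC_Icc)
    show "(\<lambda>x. (p - 1) * x powr - p) \<in> borel_measurable borel" by measurable
    fix x assume x: "x \<in> {a..b}"
    then have x0: "0 < x" using a by auto
    have "((\<lambda>x. x powr (1 - p)) has_real_derivative (1 - p) * x powr (1 - p - 1)) (at x)"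
      using x0 by (rule has_real_derivative_powr)
    then have "((\<lambda>x. - (x powr (1 - p))) has_real_derivative - ((1 - p) * x powr (1 - p - 1))) (at x)"
      by (rule DERIV_minus)
    then show "((\<lambda>x. - (x powr (1 - p))) has_real_derivative (p - 1) * x powr - p) (at x)"
      by (simp add: algebra_simps)
    show "0 \<le> (p - 1) * x powr - p" using p by simp
  qed (use ab in auto)
  moreover have "(\<integral>\<^sup>+ x. ennreal ((p - 1) * x powr (- p)) * indicator {a<..b} x \<partial>lborel)
      = (\<integral>\<^sup>+ x. ennreal ((p - 1) * x powr (- p)) * indicator {a..b} x \<partial>lborel)"
    apply (intro nn_integral_cong_AE)
    using AE_lborel_singleton[of a]
    by eventually_elim (auto simp: indicator_def)
  ultimately show ?thesis by simp
qed

context wsetup begin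

definition h :: "real \<Rightarrow> real" where "h t = Wr t / t"

lemma h_meas[measurable]: "h \<in> borel_measurable borel"
  unfolding h_def by measurable

lemma h_anti: "0 < a \<Longrightarrow> a \<le> b \<Longrightarrow> h b \<le> h a"
  unfolding h_def using Wr_concave[of a b] by (simp add: field_simps)

lemma h_nonneg: "0 \<le> h t" unfolding h_def using Wr_nonneg[of t] Wr_zero[of t]
  by (cases "t \<le> 0") auto

lemma h_cont: "0 < a \<Longrightarrow> isCont h a"
  unfolding h_def by (intro continuous_intros Wr_cont) auto

definition K :: "real \<Rightarrow> ennreal" where
  "K a = (\<integral>\<^sup>+ t\<in>{a<..}. ennreal (h t powr (q - 1) * w t / t) \<partial>lborel)"

lemma K_bound:
  assumes C: "\<And>r. r > 0 \<Longrightarrow> Phi (indicator {0<..<r}) \<le> ennreal C * enn_powr (Wfun w r) q"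
    and a: "0 < a"
  shows "K a \<le> ennreal C * ennreal (h a powr q)"
proof -
  have "ennreal (a powr q) * K a = (\<integral>\<^sup>+ t. ennreal (a powr q) * (ennreal (h t powr (q - 1) * w t / t) * indicator {a<..} t) \<partial>lborel)"
    unfolding K_def by (subst nn_integral_cmult) (auto intro!: measurable_compose[OF _ borel_measurable_indicator])
  also have "\<dots> \<le> Phi (indicator {0<..<a})"
    unfolding Phi_def Rq_def
  proof (intro nn_integral_mono)
    fix t :: real
    show "ennreal (a powr q) * (ennreal (h t powr (q - 1) * w t / t) * indicator {a<..} t)
      \<le> enn_powr (Sop (indicator {0<..<a}) t) q * enn_powr (Wfun w t) (q - 1) * ennreal (w t) * indicator {0<..} t"
    proof (cases "a < t")
      case True
      have t0: "0 < t" using a True by auto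
      have "Wr t = t * h t" unfolding h_def using t0 by simp
      then have "(a / t) powr q * Wr t powr (q - 1) = a powr q * (h t powr (q - 1) / t)"
        using t0 a h_nonneg[of t]
        by (simp add: powr_mult powr_divide powr_diff field_simps)
      then have eq: "enn_powr (Sop (indicator {0<..<a}) t) q * enn_powr (Wfun w t) (q - 1) * ennreal (w t)
          = ennreal (a powr q * (h t powr (q - 1) * w t / t))"
        using Sop_ind_gt[OF a True] a t0 w_nonneg[of t]
        by (simp add: WW_eq enn_powr_ennreal ennreal_mult[symmetric] del: ennreal_mult)
      have "ennreal (a powr q) * ennreal (h t powr (q - 1) * w t / t) = ennreal (a powr q * (h t powr (q - 1) * w t / t))"
        by (rule ennreal_mult'[symmetric]) simp
      then show ?thesis using True t0 unfolding eq by (simp add: indicator_def)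
    qed (simp add: indicator_def)
  qed
  also have "\<dots> \<le> ennreal C * enn_powr (Wfun w a) q" using C a by auto
  also have "enn_powr (Wfun w a) q = ennreal (a powr q) * ennreal (h a powr q)"
  proof -
    have "Wr a = a * h a" unfolding h_def using a by simp
    then show ?thesis using a h_nonneg[of a]
      using q1 by (simp add: Wfun_Wr enn_powr_ennreal Wr_nonneg enn_powr_mult ennreal_mult)
  qed
  finally have "ennreal (a powr q) * K a \<le> ennreal (a powr q) * (ennreal C * ennreal (h a powr q))"
    by (simp add: mult_ac)
  then show ?thesis using a by (subst (asm) ennreal_mult_le_mult_iff) auto
qed

end

context wsetup begin

lemma inner_bound:
  assumes C: "\<And>r. r > 0 \<Longrightarrow> Phi (indicator {0<..<r}) \<le> ennreal C * enn_powr (Wfun w r) q"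
    and r: "0 < r" and l: "0 < l"
  shows "(\<integral>\<^sup>+ s. ennreal (h s powr (q - 1) * w s / s) * indicator {s. r < s \<and> h s < l} s \<partial>lborel) \<le> ennreal C * ennreal (l powr q)"
proof (cases "{s. r < s \<and> h s < l} = {}")
  case True then show ?thesis by simp
next
  case False
  define S where "S = {s. r < s \<and> h s < l}"
  have Sne: "S \<noteq> {}" using False unfolding S_def .
  have bdd: "bdd_below S" unfolding S_def bdd_below_def by (auto intro: less_imp_le)
  define a where "a = Inf S"
  have ar: "r \<le> a" unfolding a_def using Sne by (intro cInf_greatest) (auto simp: S_def)
  then have a0: "0 < a" using r by auto
  have aS: "a \<le> s" if "s \<in> S" for s unfolding a_def using cInf_lower[OF that bdd] .
  have ha: "h a \<le> l"
  proof (rule ccontr)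
    assume "\<not> h a \<le> l"
    then have "l < h a" by simp
    have "(h \<longlongrightarrow> h a) (at a)" using h_cont[OF a0] unfolding isCont_def .
    then have "eventually (\<lambda>y. l < h y) (at a)" using \<open>l < h a\<close> by (rule order_tendstoD)
    then obtain d where d: "0 < d" "\<And>y. y \<noteq> a \<Longrightarrow> dist y a < d \<Longrightarrow> l < h y"
      unfolding eventually_at by auto
    have "Inf S < a + d" using d a_def by simp
    then obtain s where s: "s \<in> S" "s < a + d" using cInf_less_iff[OF Sne bdd] by auto
    show False
    proof (cases "s = a")
      case True then show False using s \<open>l < h a\<close> unfolding S_def by auto
    next
      case False
      then have "l < h s" using d(2)[of s] aS[OF s(1)] s(2) by (auto simp: dist_real_def)
      then show False using s unfolding S_def by auto
    qed
  qed
  have "(\<integral>\<^sup>+ s. ennreal (h s powr (q - 1) * w s / s) * indicator S s \<partial>lborel) \<le> K a"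
    unfolding K_def
    apply (intro nn_integral_mono_AE)
    using AE_lborel_singleton[of a]
    apply eventually_elim
    using aS by (auto simp: indicator_def less_le)
  also have "\<dots> \<le> ennreal C * ennreal (h a powr q)" using K_bound[OF C a0] by auto
  also have "\<dots> \<le> ennreal C * ennreal (l powr q)"
    using ha h_nonneg[of a] q1 by (intro mult_left_mono ennreal_leI powr_mono2) auto
  finally show ?thesis unfolding S_def .
qed

end

context wsetup begin

lemma P_imp_B1:
  assumes C0: "\<And>r. r > 0 \<Longrightarrow> Phi (indicator {0<..<r}) \<le> ennreal C0 * enn_powr (Wfun w r) q"
  shows "B1 w"
proof -
  define C where "C = max C0 0"
  have C0': "0 \<le> C" unfolding C_def by simp
  have C: "Phi (indicator {0<..<r}) \<le> ennreal C * enn_powr (Wfun w r) q" if "r > 0" for r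
    using C0[OF that] by (rule order_trans) (auto intro!: mult_right_mono ennreal_leI simp: C_def)
  have main: "(\<integral>\<^sup>+ s\<in>{r<..}. ennreal (w s / s) \<partial>lborel) \<le> ennreal (C * q / r) * Wfun w r" if r: "0 < r" for r
  proof (cases "Wr r = 0")
    case True
    have wz: "w s = 0" if "r < s" for s
    proof -
      have "r * w r \<le> 0" using Wr_ge[OF r] True by simp
      then have "w r \<le> 0" using r by (simp add: mult_le_0_iff)
      moreover have "w s \<le> w r" using w_mono[OF r] that by auto
      moreover have "0 \<le> w s" using w_nonneg that r by auto
      ultimately show ?thesis by auto
    qed
    have "(\<lambda>s. ennreal (w s / s) * indicator {r<..} s) = (\<lambda>s. 0)"
      by (auto simp: fun_eq_iff indicator_def wz)
    then have "(\<integral>\<^sup>+ s\<in>{r<..}. ennreal (w s / s) \<partial>lborel) = (\<integral>\<^sup>+ s. 0 \<partial>lborel)"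
      by simp
    then show ?thesis by simp
  next
    case False
    then have Wr0: "0 < Wr r" using Wr_nonneg[of r] by auto
    define hr where "hr = h r"
    have hr0: "0 < hr" unfolding hr_def h_def using Wr0 r by simp
    have hs0: "0 < h s" if "r < s" for s
    proof -
      have "Wr r \<le> Wr s" using Wr_mono that by auto
      then show ?thesis unfolding h_def using Wr0 that r by auto
    qed
    have hsr: "h s \<le> hr" if "r < s" for s unfolding hr_def using h_anti[OF r] that by auto
    define u where "u = (\<lambda>s. ennreal (h s powr (q - 1) * w s / s))"
    have um[measurable]: "u \<in> borel_measurable borel" unfolding u_def by measurable
    define F where "F = (\<lambda>s l. ennreal ((q - 1) * l powr (- q)) * (if h s < l \<and> l \<le> hr then 1 else 0) * u s * indicator {r<..} s)"
    have point: "ennreal (w s / s) * indicator {r<..} s = ennreal (hr powr (1 - q)) * (u s * indicator {r<..} s) + (\<integral>\<^sup>+ l. F s l \<partial>lborel)" for s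
    proof (cases "r < s")
      case False then show ?thesis by (simp add: F_def indicator_def)
    next
      case True
      have s0: "0 < s" using True r by auto
      have "(\<integral>\<^sup>+ l. F s l \<partial>lborel) = (\<integral>\<^sup>+ l. ennreal ((q - 1) * l powr (- q)) * indicator {h s<..hr} l \<partial>lborel) * u s"
        unfolding F_def using True
        by (subst nn_integral_multc[symmetric]) (measurable, intro nn_integral_cong, auto simp: indicator_def)
      also have "\<dots> = ennreal (h s powr (1 - q) - hr powr (1 - q)) * u s"
        using nn_integral_negpowr[OF q1 hs0[OF True] hsr[OF True]] by simp
      finally have eqF: "(\<integral>\<^sup>+ l. F s l \<partial>lborel) = ennreal (h s powr (1 - q) - hr powr (1 - q)) * u s" .
      have mono: "hr powr (1 - q) \<le> h s powr (1 - q)"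
        using hs0[OF True] hsr[OF True] q1 by (intro powr_mono2') auto
      have U0: "0 \<le> h s powr (q - 1) * w s / s" using w_nonneg[OF s0] s0 by simp
      have "ennreal (hr powr (1 - q)) * u s + ennreal (h s powr (1 - q) - hr powr (1 - q)) * u s
          = ennreal (h s powr (1 - q)) * u s"
        using mono by (simp add: distrib_right[symmetric] ennreal_plus[symmetric] del: ennreal_plus)
      also have "\<dots> = ennreal (h s powr (1 - q) * (h s powr (q - 1) * w s / s))"
        unfolding u_def by (rule ennreal_mult'[symmetric]) simp
      also have "h s powr (1 - q) * (h s powr (q - 1) * w s / s) = w s / s"
      proof -
        have "h s powr (1 - q) * h s powr (q - 1) = 1" using hs0[OF True] by (simp add: powr_add[symmetric])
        then show ?thesis by (simp add: mult.assoc[symmetric])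
      qed
      finally show ?thesis using True eqF by (simp add: indicator_def)
    qed
    have "(\<integral>\<^sup>+ s\<in>{r<..}. ennreal (w s / s) \<partial>lborel)
        = (\<integral>\<^sup>+ s. ennreal (hr powr (1 - q)) * (u s * indicator {r<..} s) + (\<integral>\<^sup>+ l. F s l \<partial>lborel) \<partial>lborel)"
      using point by simp
    also have "\<dots> = ennreal (hr powr (1 - q)) * K r + (\<integral>\<^sup>+ s. (\<integral>\<^sup>+ l. F s l \<partial>lborel) \<partial>lborel)"
      unfolding K_def u_def F_def
      by (subst nn_integral_add) (measurable, simp add: nn_integral_cmult)
    also have "(\<integral>\<^sup>+ s. (\<integral>\<^sup>+ l. F s l \<partial>lborel) \<partial>lborel) = (\<integral>\<^sup>+ l. (\<integral>\<^sup>+ s. F s l \<partial>lborel) \<partial>lborel)"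
      unfolding F_def by (rule lborel_pair.Fubini') measurable
    also have "\<dots> \<le> (\<integral>\<^sup>+ l. ennreal (C * (q - 1)) * indicator {0<..hr} l \<partial>lborel)"
    proof (intro nn_integral_mono)
      fix l :: real
      show "(\<integral>\<^sup>+ s. F s l \<partial>lborel) \<le> ennreal (C * (q - 1)) * indicator {0<..hr} l"
      proof (cases "0 < l \<and> l \<le> hr")
        case False
        have "(\<lambda>s. F s l) = (\<lambda>s. 0)"
        proof
          fix s show "F s l = 0"
          proof (cases "r < s")
            case True then show ?thesis using False hs0[OF True] unfolding F_def by auto
          qed (simp add: F_def)
        qed
        then show ?thesis by simp
      next
        case True
        then have l0: "0 < l" and lhr: "l \<le> hr" by auto
        have "(\<integral>\<^sup>+ s. F s l \<partial>lborel) = ennreal ((q - 1) * l powr (- q)) * (\<integral>\<^sup>+ s. u s * indicator {s. r < s \<and> h s < l} s \<partial>lborel)"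
          unfolding F_def
          by (subst nn_integral_cmult[symmetric]) (measurable, intro nn_integral_cong, use l0 lhr in \<open>auto simp: indicator_def\<close>)
        also have "\<dots> \<le> ennreal ((q - 1) * l powr (- q)) * (ennreal C * ennreal (l powr q))"
          unfolding u_def by (intro mult_left_mono inner_bound[OF C r]) (use True in auto)
        also have "\<dots> = ennreal (C * (q - 1))"
        proof -
          have pw: "l powr (- q) * l powr q = 1" using l0 by (simp add: powr_add[symmetric])
          have "ennreal ((q - 1) * l powr (- q)) * (ennreal C * ennreal (l powr q)) = ennreal ((q - 1) * l powr (- q) * C * l powr q)"
            by (rule ennreal_mult3) (use q1 C0' in auto)
          also have "(q - 1) * l powr (- q) * C * l powr q = C * (q - 1) * (l powr (- q) * l powr q)"
            by (simp add: algebra_simps)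
          also have "\<dots> = C * (q - 1)" using pw by simp
          finally show ?thesis .
        qed
        finally show ?thesis using True by simp
      qed
    qed
    also have "(\<integral>\<^sup>+ l. ennreal (C * (q - 1)) * indicator {0<..hr} l \<partial>lborel) = ennreal (C * (q - 1)) * ennreal hr"
      using hr0 by (subst nn_integral_cmult_indicator) auto
    finally have "(\<integral>\<^sup>+ s\<in>{r<..}. ennreal (w s / s) \<partial>lborel) \<le> ennreal (hr powr (1 - q)) * K r + ennreal (C * (q - 1)) * ennreal hr"
      by simp
    also have "\<dots> \<le> ennreal (hr powr (1 - q)) * (ennreal C * ennreal (hr powr q)) + ennreal (C * (q - 1)) * ennreal hr"
      unfolding hr_def by (intro add_mono mult_left_mono K_bound[OF C r]) auto
    also have "\<dots> = ennreal (C * q / r) * Wfun w r"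
    proof -
      have pw: "hr powr (1 - q) * hr powr q = hr" using hr0 by (simp add: powr_add[symmetric])
      have s1: "ennreal (hr powr (1 - q)) * (ennreal C * ennreal (hr powr q)) = ennreal (hr powr (1 - q) * C * hr powr q)"
        by (rule ennreal_mult3) (use C0' in auto)
      have s2: "ennreal (C * (q - 1)) * ennreal hr = ennreal (C * (q - 1) * hr)"
        by (intro ennreal_mult'[symmetric]) (use C0' q1 in auto)
      have s3: "ennreal (hr powr (1 - q) * C * hr powr q) + ennreal (C * (q - 1) * hr)
          = ennreal (hr powr (1 - q) * C * hr powr q + C * (q - 1) * hr)"
        by (intro ennreal_plus[symmetric]) (use C0' q1 hr0 in auto)
      have e1: "hr powr (1 - q) * C * hr powr q = C * hr"
      proof -
        have "hr powr (1 - q) * C * hr powr q = C * (hr powr (1 - q) * hr powr q)" by (simp add: algebra_simps)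
        then show ?thesis using pw by simp
      qed
      have e2: "C * hr + C * (q - 1) * hr = C * q / r * Wr r"
        unfolding hr_def h_def using r by (simp add: field_simps)
      have s4: "ennreal (C * q / r * Wr r) = ennreal (C * q / r) * ennreal (Wr r)"
        by (intro ennreal_mult') (use C0' q1 r in auto)
      have "ennreal (hr powr (1 - q)) * (ennreal C * ennreal (hr powr q)) + ennreal (C * (q - 1)) * ennreal hr
          = ennreal (hr powr (1 - q) * C * hr powr q + C * (q - 1) * hr)" unfolding s1 s2 s3 ..
      also have "\<dots> = ennreal (C * q / r * Wr r)" unfolding e1 e2 ..
      also have "\<dots> = ennreal (C * q / r) * Wfun w r" unfolding s4 Wfun_Wr ..
      finally show ?thesis .
    qed
    finally show ?thesis .
  qed
  show ?thesis unfolding B1_def using main by blast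
qed

end

lemma Sop_nonpos: "s \<le> 0 \<Longrightarrow> Sop g s = 0"
  unfolding Sop_def by simp

lemma Sop_meas: assumes "decp f" shows "Sop f \<in> borel_measurable borel"
proof -
  have "Sop f = (\<lambda>s. Sop f s * indicator {0<..} s)"
    by (auto simp: fun_eq_iff indicator_def Sop_nonpos)
  then show ?thesis using decp_meas0[OF decp_Sop[OF assms]] by simp
qed

lemma Sop_cmult: assumes [measurable]: "g \<in> borel_measurable borel"
  shows "Sop (\<lambda>s. c * g s) t = c * Sop g t"
proof -
  have "(\<integral>\<^sup>+ s\<in>{0<..<t}. c * g s \<partial>lborel) = c * (\<integral>\<^sup>+ s\<in>{0<..<t}. g s \<partial>lborel)"
    by (subst nn_integral_cmult[symmetric]) (auto simp: mult.assoc)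
  then show ?thesis unfolding Sop_def by (simp add: mult_ac)
qed

lemma Sop_cong_AE: assumes "AE s in lborel. g s = g' s" shows "Sop g t = Sop g' t"
proof -
  have "(\<integral>\<^sup>+ s\<in>{0<..<t}. g s \<partial>lborel) = (\<integral>\<^sup>+ s\<in>{0<..<t}. g' s \<partial>lborel)"
    using assms by (intro nn_integral_cong_AE) auto
  then show ?thesis unfolding Sop_def by simp
qed

context wsetup begin

lemma Rq_mono: "(\<And>s. 0 < s \<Longrightarrow> f s \<le> g s) \<Longrightarrow> Rq f \<le> Rq g"
  unfolding Rq_def using q1
  by (intro nn_integral_mono) (auto simp: indicator_def intro!: mult_right_mono enn_powr_mono)

lemma Phi_mono: "(\<And>s. 0 < s \<Longrightarrow> f s \<le> g s) \<Longrightarrow> Phi f \<le> Phi g"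
  unfolding Phi_def by (intro Rq_mono Sop_mono) auto

lemma Phi_initial:
  assumes C: "\<And>r. r > 0 \<Longrightarrow> Phi (indicator {0<..<r}) \<le> ennreal C * enn_powr (Wfun w r) q"
    and C1: "1 \<le> C" and E: "initial E"
  shows "Phi (indicator E) \<le> ennreal C * enn_powr (nu E) q"
proof -
  have Epos: "E \<subseteq> {0<..}" using E unfolding initial_def by auto
  consider "E = {}" | "\<not> bdd_above E" | "E \<noteq> {}" "bdd_above E" by auto
  then show ?thesis
  proof cases
    case 1
    have "Sop (indicator E) t = 0" for t unfolding 1 Sop_def by simp
    then have "Phi (indicator E) = 0" unfolding Phi_def Rq_def by simp
    then show ?thesis by simp
  next
    case 2
    then have EE: "E = {0<..}" using E unfolding initial_def bdd_above_def
      by (auto simp: not_le) (meson less_imp_le)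
    have S1: "Sop (indicator E) t = 1" if t: "0 < t" for t
    proof -
      have "(\<lambda>s. indicator E s * indicator {0<..<t} s :: ennreal) = indicator {0<..<t}"
        unfolding EE by (auto simp: fun_eq_iff indicator_def)
      then show ?thesis unfolding Sop_def using t by (simp add: ennreal_mult[symmetric] del: ennreal_mult)
    qed
    have "Phi (indicator E) = (\<integral>\<^sup>+ s\<in>E. enn_powr (Wfun w s) (q - 1) * ennreal (w s) \<partial>lborel)"
      unfolding Phi_def Rq_def EE by (intro nn_integral_cong) (auto simp: indicator_def S1[unfolded EE])
    also have "\<dots> \<le> enn_powr (nu E) q" by (rule initial_upper[OF E])
    also have "\<dots> \<le> ennreal C * enn_powr (nu E) q"
    proof -
      have "1 * enn_powr (nu E) q \<le> ennreal C * enn_powr (nu E) q"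
        by (intro mult_right_mono) (use C1 in auto)
      then show ?thesis by simp
    qed
    finally show ?thesis .
  next
    case 3
    define a where "a = Sup E"
    obtain x where x: "x \<in> E" using 3 by auto
    have a0: "0 < a" unfolding a_def using x Epos 3 by (meson cSup_upper greaterThan_iff less_le_trans subsetD)
    have sub: "{0<..<a} \<subseteq> E"
    proof
      fix y assume y: "y \<in> {0<..<a}"
      then obtain z where "z \<in> E" "y < z" unfolding a_def using less_cSup_iff[OF 3(1) 3(2)] by auto
      then show "y \<in> E" using E y unfolding initial_def by auto
    qed
    have sup: "E \<subseteq> {0<..a}" unfolding a_def using Epos 3 by (auto intro: cSup_upper)
    have AEeq: "AE s in lborel. indicator E s = (indicator {0<..<a} s :: ennreal)"
      using AE_lborel_singleton[of a] by eventually_elim (use sub sup in \<open>auto simp: indicator_def\<close>)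
    have "Phi (indicator E) = Phi (indicator {0<..<a})"
      unfolding Phi_def Rq_def using Sop_cong_AE[OF AEeq] by simp
    also have "\<dots> \<le> ennreal C * enn_powr (Wfun w a) q" using C a0 by auto
    also have "Wfun w a = nu E"
    proof (rule antisym)
      show "Wfun w a \<le> nu E" unfolding Wfun_nu by (rule nu_mono[OF sub])
      show "nu E \<le> Wfun w a" using nu_mono[OF sup] nu_Ioc[of a] a0 by simp
    qed
    finally show ?thesis .
  qed
qed

end

lemma young_real:
  fixes x y s q :: real
  assumes q: "1 < q" and s: "0 < s" and x: "0 \<le> x" and y: "0 \<le> y"
  shows "x powr (q - 1) * y \<le> (q - 1) / q / s * x powr q + s powr (q - 1) / q * y powr q"
proof -
  define p where "p = q / (q - 1)"
  have p1: "1 < p" unfolding p_def using q by (simp add: field_simps)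
  have pq: "1 / p + 1 / q = 1" unfolding p_def using q by (simp add: field_simps)
  define X where "X = x powr (q - 1) * s powr (- ((q - 1) / q))"
  define Y where "Y = y * s powr ((q - 1) / q)"
  have X0: "0 \<le> X" unfolding X_def by simp
  have Y0: "0 \<le> Y" unfolding Y_def using y by simp
  have XY: "X * Y = x powr (q - 1) * y"
  proof -
    have "s powr (- ((q - 1) / q)) * s powr ((q - 1) / q) = 1" using s by (simp add: powr_add[symmetric])
    then show ?thesis unfolding X_def Y_def by (simp add: algebra_simps)
  qed
  have Xp: "X powr p = x powr q / s"
  proof -
    have "X powr p = (x powr (q - 1)) powr p * (s powr (- ((q - 1) / q))) powr p"
      unfolding X_def using x s by (simp add: powr_mult)
    also have "(x powr (q - 1)) powr p = x powr q" unfolding p_def using q by (simp add: powr_powr)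
    also have "(s powr (- ((q - 1) / q))) powr p = s powr (-1)"
    proof -
      have e: "- ((q - 1) / q) * p = -1" unfolding p_def using q by (simp add: field_simps)
      have "(s powr (- ((q - 1) / q))) powr p = s powr (- ((q - 1) / q) * p)" by (simp add: powr_powr)
      then show ?thesis using e by simp
    qed
    finally show ?thesis using s by (simp add: powr_minus divide_inverse)
  qed
  have Yq: "Y powr q = y powr q * s powr (q - 1)"
  proof -
    have "Y powr q = y powr q * (s powr ((q - 1) / q)) powr q" unfolding Y_def using y s by (simp add: powr_mult)
    also have "(s powr ((q - 1) / q)) powr q = s powr (q - 1)" using q by (simp add: powr_powr)
    finally show ?thesis .
  qed
  have "x powr (q - 1) * y = X * Y" by (simp add: XY)
  also have "\<dots> \<le> X powr p / p + Y powr q / q" using Youngs_inequality[OF p1 q pq X0 Y0] .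
  also have "X powr p / p = (q - 1) / q / s * x powr q"
  proof -
    have "X powr p / p = x powr q / s / p" by (simp only: Xp)
    then show ?thesis unfolding p_def using q s by (simp add: field_simps)
  qed
  also have "Y powr q / q = s powr (q - 1) / q * y powr q" unfolding Yq by (simp add: field_simps)
  finally show ?thesis .
qed

lemma young_enn:
  fixes a b :: ennreal and s q :: real
  assumes q: "1 < q" and s: "0 < s"
  shows "enn_powr a (q - 1) * b \<le> ennreal ((q - 1) / q / s) * enn_powr a q + ennreal (s powr (q - 1) / q) * enn_powr b q"
proof (cases a rule: ennreal_cases; cases b rule: ennreal_cases)
  fix x y assume a: "a = ennreal x" "0 \<le> x" and b: "b = ennreal y" "0 \<le> y"
  have "enn_powr a (q - 1) * b = ennreal (x powr (q - 1) * y)"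
    using a b by (simp add: enn_powr_ennreal ennreal_mult)
  also have "\<dots> \<le> ennreal ((q - 1) / q / s * x powr q + s powr (q - 1) / q * y powr q)"
    using young_real[OF q s a(2) b(2)] by (rule ennreal_leI)
  also have "\<dots> = ennreal ((q - 1) / q / s * x powr q) + ennreal (s powr (q - 1) / q * y powr q)"
    by (intro ennreal_plus) (use q s in auto)
  also have "ennreal ((q - 1) / q / s * x powr q) = ennreal ((q - 1) / q / s) * ennreal (x powr q)"
    by (intro ennreal_mult') (use q s in auto)
  also have "ennreal (s powr (q - 1) / q * y powr q) = ennreal (s powr (q - 1) / q) * ennreal (y powr q)"
    by (intro ennreal_mult') (use q s in auto)
  also have "ennreal (x powr q) = enn_powr a q" using a by (simp add: enn_powr_ennreal)
  also have "ennreal (y powr q) = enn_powr b q" using b by (simp add: enn_powr_ennreal)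
  finally show ?thesis .
next
  fix x assume a: "a = ennreal x" "0 \<le> x" and b: "b = top"
  show ?thesis
  proof (cases "x = 0")
    case True then show ?thesis using a b by simp
  next
    case False
    have "ennreal (s powr (q - 1) / q) * enn_powr b q = top" using b q s by (simp add: ennreal_mult_top)
    then show ?thesis by simp
  qed
next
  fix y assume a: "a = top" and b: "b = ennreal y" "0 \<le> y"
  show ?thesis
  proof (cases "y = 0")
    case True then show ?thesis using a b by simp
  next
    case False
    have "ennreal ((q - 1) / q / s) * enn_powr a q = top" using a q s by (simp add: ennreal_mult_top)
    then show ?thesis by simp
  qed
next
  assume a: "a = top" and b: "b = top"
  have "ennreal ((q - 1) / q / s) * enn_powr a q = top" using a q s by (simp add: ennreal_mult_top)
  then show ?thesis by simp
qed


context wsetup begin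

definition kk :: "(real \<Rightarrow> ennreal) \<Rightarrow> real \<Rightarrow> real \<Rightarrow> ennreal" where
  "kk f l s = ennreal (1 / s) * (\<integral>\<^sup>+ u. (if 0 < u \<and> ennreal l < f u * indicator {0<..} u then 1 else 0) * (if 0 < u \<and> u < s then 1 else 0) \<partial>lborel)"

lemma kk_meas:
  assumes f: "decp f"
  shows "(\<lambda>(s, l). kk f l s) \<in> borel_measurable (lborel \<Otimes>\<^sub>M lborel)"
proof -
  have [measurable]: "(\<lambda>u. f u * indicator {0<..} u) \<in> borel_measurable borel" using decp_meas0[OF f] .
  show ?thesis unfolding kk_def by measurable
qed

lemma kk_eq: "kk f l s = Sop (indicator (Lev f (ennreal l))) s"
  unfolding kk_def Sop_def
  by (intro arg_cong[where f="\<lambda>x. ennreal (1 / s) * x"] nn_integral_cong) (auto simp: indicator_def Lev_def)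

lemma layer1: "x = (\<integral>\<^sup>+ l. (if 0 < l \<and> ennreal l < x then 1 else 0) \<partial>lborel)"
proof -
  have "x = enn_powr x 1" by simp
  also have "\<dots> = (\<integral>\<^sup>+ m. ennreal (1 * m powr (1 - 1)) * indicator {m. 0 < m \<and> ennreal m < x} m \<partial>lborel)"
    by (rule layer_cake_powr) simp
  also have "\<dots> = (\<integral>\<^sup>+ l. (if 0 < l \<and> ennreal l < x then 1 else 0) \<partial>lborel)"
    by (intro nn_integral_cong) (auto simp: indicator_def)
  finally show ?thesis .
qed

lemma Sop_layer:
  assumes f: "decp f"
  shows "Sop f s = (\<integral>\<^sup>+ l. indicator {0<..} l * kk f l s \<partial>lborel)"
proof -
  have [measurable]: "(\<lambda>u. f u * indicator {0<..} u) \<in> borel_measurable borel" using decp_meas0[OF f] .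
  have "(\<integral>\<^sup>+ u\<in>{0<..<s}. f u \<partial>lborel)
      = (\<integral>\<^sup>+ u. (\<integral>\<^sup>+ l. (if 0 < l \<and> ennreal l < f u * indicator {0<..} u then 1 else 0) * (if 0 < u \<and> u < s then 1 else 0) \<partial>lborel) \<partial>lborel)"
  proof (intro nn_integral_cong)
    fix u
    have "f u * indicator {0<..<s} u = (f u * indicator {0<..} u) * (if 0 < u \<and> u < s then 1 else 0)"
      by (auto simp: indicator_def)
    also have "\<dots> = (\<integral>\<^sup>+ l. (if 0 < l \<and> ennreal l < f u * indicator {0<..} u then 1 else 0) \<partial>lborel) * (if 0 < u \<and> u < s then 1 else 0)"
      by (subst layer1) simp
    also have "\<dots> = (\<integral>\<^sup>+ l. (if 0 < l \<and> ennreal l < f u * indicator {0<..} u then 1 else 0) * (if 0 < u \<and> u < s then 1 else 0) \<partial>lborel)"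
      by (rule nn_integral_multc[symmetric]) measurable
    finally show "f u * indicator {0<..<s} u = \<dots>" .
  qed
  also have "\<dots> = (\<integral>\<^sup>+ l. (\<integral>\<^sup>+ u. (if 0 < l \<and> ennreal l < f u * indicator {0<..} u then 1 else 0) * (if 0 < u \<and> u < s then 1 else 0) \<partial>lborel) \<partial>lborel)"
    by (rule lborel_pair.Fubini') measurable
  finally have e: "(\<integral>\<^sup>+ u\<in>{0<..<s}. f u \<partial>lborel) = \<dots>" .
  have "Sop f s = (\<integral>\<^sup>+ l. ennreal (1 / s) * (\<integral>\<^sup>+ u. (if 0 < l \<and> ennreal l < f u * indicator {0<..} u then 1 else 0) * (if 0 < u \<and> u < s then 1 else 0) \<partial>lborel) \<partial>lborel)"
    unfolding Sop_def e by (rule nn_integral_cmult[symmetric]) measurable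
  also have "\<dots> = (\<integral>\<^sup>+ l. indicator {0<..} l * kk f l s \<partial>lborel)"
  proof (intro nn_integral_cong)
    fix l :: real
    show "ennreal (1 / s) * (\<integral>\<^sup>+ u. (if 0 < l \<and> ennreal l < f u * indicator {0<..} u then 1 else 0) * (if 0 < u \<and> u < s then 1 else 0) \<partial>lborel)
      = indicator {0<..} l * kk f l s"
    proof (cases "0 < l")
      case True
      have "(\<integral>\<^sup>+ u. (if 0 < l \<and> ennreal l < f u * indicator {0<..} u then 1 else 0) * (if 0 < u \<and> u < s then 1 else 0) \<partial>lborel)
        = (\<integral>\<^sup>+ u. (if 0 < u \<and> ennreal l < f u * indicator {0<..} u then 1 else 0) * (if 0 < u \<and> u < s then 1 else 0) \<partial>lborel)"
        using True by (intro nn_integral_cong) auto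
      then show ?thesis using True unfolding kk_def by simp
    qed simp
  qed
  finally show ?thesis .
qed

definition nrm :: "(real \<Rightarrow> ennreal) \<Rightarrow> ennreal" where
  "nrm f = (\<integral>\<^sup>+ t\<in>{0<..}. f t * ennreal (w t) \<partial>lborel)"

lemma nrm_layer:
  assumes f: "decp f"
  shows "nrm f = (\<integral>\<^sup>+ l. indicator {0<..} l * nu (Lev f (ennreal l)) \<partial>lborel)"
proof -
  have [measurable]: "(\<lambda>u. f u * indicator {0<..} u) \<in> borel_measurable borel" using decp_meas0[OF f] .
  have "nrm f = (\<integral>\<^sup>+ u. (\<integral>\<^sup>+ l. (if 0 < l \<and> ennreal l < f u * indicator {0<..} u then 1 else 0) * ennreal (w u) \<partial>lborel) \<partial>lborel)"
    unfolding nrm_def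
  proof (intro nn_integral_cong)
    fix u
    have "f u * ennreal (w u) * indicator {0<..} u = (f u * indicator {0<..} u) * ennreal (w u)"
      by (auto simp: indicator_def)
    also have "\<dots> = (\<integral>\<^sup>+ l. (if 0 < l \<and> ennreal l < f u * indicator {0<..} u then 1 else 0) \<partial>lborel) * ennreal (w u)"
      by (subst layer1) simp
    also have "\<dots> = (\<integral>\<^sup>+ l. (if 0 < l \<and> ennreal l < f u * indicator {0<..} u then 1 else 0) * ennreal (w u) \<partial>lborel)"
      by (rule nn_integral_multc[symmetric]) measurable
    finally show "f u * ennreal (w u) * indicator {0<..} u = \<dots>" .
  qed
  also have "\<dots> = (\<integral>\<^sup>+ l. (\<integral>\<^sup>+ u. (if 0 < l \<and> ennreal l < f u * indicator {0<..} u then 1 else 0) * ennreal (w u) \<partial>lborel) \<partial>lborel)"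
    by (rule lborel_pair.Fubini') measurable
  also have "\<dots> = (\<integral>\<^sup>+ l. indicator {0<..} l * nu (Lev f (ennreal l)) \<partial>lborel)"
    unfolding nu_def
  proof (intro nn_integral_cong)
    fix l :: real
    show "(\<integral>\<^sup>+ u. (if 0 < l \<and> ennreal l < f u * indicator {0<..} u then 1 else 0) * ennreal (w u) \<partial>lborel)
      = indicator {0<..} l * (\<integral>\<^sup>+ u\<in>Lev f (ennreal l). ennreal (w u) \<partial>lborel)"
    proof (cases "0 < l")
      case True
      then show ?thesis by (simp, intro nn_integral_cong) (auto simp: indicator_def Lev_def)
    qed simp
  qed
  finally show ?thesis .
qed

end

lemma enn_powr_meas[measurable]: assumes [measurable]: "g \<in> borel_measurable M"
  shows "(\<lambda>x. enn_powr (g x) p) \<in> borel_measurable M"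
proof -
  have 1: "(\<lambda>x. ennreal (enn2real (g x) powr p)) \<in> borel_measurable M"
    by measurable
  have 2: "{x \<in> space M. g x = top} \<in> sets M" by measurable
  show ?thesis unfolding enn_powr_def by (rule measurable_If[OF measurable_const 1 2]) simp
qed

context wsetup begin

lemma kk_meas1: assumes f: "decp f" shows "kk f l \<in> borel_measurable borel"
proof -
  have [measurable]: "(\<lambda>u. f u * indicator {0<..} u) \<in> borel_measurable borel" using decp_meas0[OF f] .
  show ?thesis unfolding kk_def by measurable
qed

lemma per_l_bound:
  assumes C: "\<And>r. r > 0 \<Longrightarrow> Phi (indicator {0<..<r}) \<le> ennreal C * enn_powr (Wfun w r) q"
    and C1: "1 \<le> C" and f: "decp f" and P: "Phi f = ennreal P" "0 \<le> P" and e: "0 < e" and l: "0 < l"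
  shows "(\<integral>\<^sup>+ s. enn_powr (Wfun w s) (q - 1) * ennreal (w s) * indicator {0<..} s * enn_powr (Sop f s) (q - 1) * kk f l s \<partial>lborel)
     \<le> nu (Lev f (ennreal l)) * ennreal ((q - 1) / q / e * P + C * e powr (q - 1) / q)"
proof -
  define E where "E = Lev f (ennreal l)"
  define mu where "mu = (\<lambda>s. enn_powr (Wfun w s) (q - 1) * ennreal (w s) * indicator {0<..} s)"
  have mum[measurable]: "mu \<in> borel_measurable borel" unfolding mu_def by measurable
  have Km[measurable]: "Sop f \<in> borel_measurable borel" using Sop_meas[OF f] .
  have km[measurable]: "kk f l \<in> borel_measurable borel" using kk_meas1[OF f] .
  have kq[measurable]: "(\<lambda>s. enn_powr (kk f l s) q) \<in> borel_measurable borel" by (rule enn_powr_meas[OF km])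
  have Kq[measurable]: "(\<lambda>s. enn_powr (Sop f s) q) \<in> borel_measurable borel" by (rule enn_powr_meas[OF Km])
  have Kq1[measurable]: "(\<lambda>s. enn_powr (Sop f s) (q - 1)) \<in> borel_measurable borel" by (rule enn_powr_meas[OF Km])
  have PhiE: "Phi g = (\<integral>\<^sup>+ s. mu s * enn_powr (Sop g s) q \<partial>lborel)" for g
    unfolding Phi_def Rq_def mu_def by (intro nn_integral_cong) (simp add: mult_ac)
  have kE: "kk f l s = Sop (indicator E) s" for s unfolding E_def by (rule kk_eq)
  have PE: "Phi (indicator E) \<le> ennreal C * enn_powr (nu E) q"
    unfolding E_def by (intro Phi_initial[OF C C1] initial_Lev[OF f])
  define M where "M = (q - 1) / q / e * P + C * e powr (q - 1) / q"
  have M0: "0 < M" unfolding M_def using q1 P e C1 by (intro add_nonneg_pos) auto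
  have main: "(\<integral>\<^sup>+ s. mu s * enn_powr (Sop f s) (q - 1) * kk f l s \<partial>lborel) \<le> nu E * ennreal M"
  proof (cases "nu E" rule: ennreal_cases)
    case top
    then show ?thesis using M0 by (simp add: ennreal_top_mult)
  next
    case (real n)
    show ?thesis
    proof (cases "n = 0")
      case True
      have "Phi (indicator E) = 0" using PE real True q1 by simp
      then have "(\<integral>\<^sup>+ s. mu s * enn_powr (kk f l s) q \<partial>lborel) = 0" unfolding PhiE kE .
      moreover have mm: "(\<lambda>s. mu s * enn_powr (kk f l s) q) \<in> borel_measurable lborel" by measurable
      ultimately have "AE s in lborel. mu s * enn_powr (kk f l s) q = 0"
        using nn_integral_0_iff_AE[OF mm] by simp
      then have AE0: "AE s in lborel. mu s * enn_powr (Sop f s) (q - 1) * kk f l s = 0"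
        by eventually_elim (use q1 in \<open>auto simp: enn_powr_eq_0_iff\<close>)
      moreover have mm2: "(\<lambda>s. mu s * enn_powr (Sop f s) (q - 1) * kk f l s) \<in> borel_measurable lborel" by measurable
      ultimately have "(\<integral>\<^sup>+ s. mu s * enn_powr (Sop f s) (q - 1) * kk f l s \<partial>lborel) = 0"
        using nn_integral_0_iff_AE[OF mm2] by simp
      then show ?thesis by simp
    next
      case False
      then have n0: "0 < n" using real by auto
      define sg where "sg = e / n"
      have sg0: "0 < sg" unfolding sg_def using e n0 by simp
      have "(\<integral>\<^sup>+ s. mu s * enn_powr (Sop f s) (q - 1) * kk f l s \<partial>lborel)
          \<le> (\<integral>\<^sup>+ s. ennreal ((q - 1) / q / sg) * (mu s * enn_powr (Sop f s) q) + ennreal (sg powr (q - 1) / q) * (mu s * enn_powr (kk f l s) q) \<partial>lborel)"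
      proof (intro nn_integral_mono)
        fix s
        have "mu s * enn_powr (Sop f s) (q - 1) * kk f l s = mu s * (enn_powr (Sop f s) (q - 1) * kk f l s)"
          by (simp add: mult.assoc)
        also have "\<dots> \<le> mu s * (ennreal ((q - 1) / q / sg) * enn_powr (Sop f s) q + ennreal (sg powr (q - 1) / q) * enn_powr (kk f l s) q)"
          by (intro mult_left_mono young_enn q1 sg0) auto
        also have "\<dots> = ennreal ((q - 1) / q / sg) * (mu s * enn_powr (Sop f s) q) + ennreal (sg powr (q - 1) / q) * (mu s * enn_powr (kk f l s) q)"
          by (simp add: distrib_left mult_ac)
        finally show "mu s * enn_powr (Sop f s) (q - 1) * kk f l s \<le> \<dots>" .
      qed
      also have "\<dots> = ennreal ((q - 1) / q / sg) * Phi f + ennreal (sg powr (q - 1) / q) * Phi (indicator E)"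
        unfolding PhiE kE[symmetric]
        by (subst nn_integral_add) (measurable, simp add: nn_integral_cmult)
      also have "\<dots> \<le> ennreal ((q - 1) / q / sg) * ennreal P + ennreal (sg powr (q - 1) / q) * (ennreal C * ennreal (n powr q))"
      proof (intro add_mono mult_left_mono)
        show "Phi f \<le> ennreal P" using P by simp
        show "Phi (indicator E) \<le> ennreal C * ennreal (n powr q)" using PE real by (simp add: enn_powr_ennreal)
      qed auto
      also have "ennreal ((q - 1) / q / sg) * ennreal P = ennreal ((q - 1) / q / sg * P)"
        by (rule ennreal_mult'[symmetric]) (use q1 sg0 in auto)
      also have "ennreal (sg powr (q - 1) / q) * (ennreal C * ennreal (n powr q)) = ennreal (sg powr (q - 1) / q * C * n powr q)"
        by (rule ennreal_mult3) (use q1 C1 in auto)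
      also have "ennreal ((q - 1) / q / sg * P) + ennreal (sg powr (q - 1) / q * C * n powr q) = ennreal ((q - 1) / q / sg * P + sg powr (q - 1) / q * C * n powr q)"
        by (intro ennreal_plus[symmetric]) (use q1 sg0 P C1 in auto)
      also have "(q - 1) / q / sg * P + sg powr (q - 1) / q * C * n powr q = n * M"
      proof -
        have a1: "(q - 1) / q / sg * P = n * ((q - 1) / q / e * P)" unfolding sg_def using n0 e by (simp add: field_simps)
        have "sg powr (q - 1) * n powr q = e powr (q - 1) * n"
        proof -
          have "sg powr (q - 1) = e powr (q - 1) / n powr (q - 1)" unfolding sg_def using e n0 by (simp add: powr_divide)
          moreover have "n powr q = n powr (q - 1) * n" using n0 powr_add[of n "q - 1" 1] by simp
          ultimately show ?thesis using n0 by (simp add: field_simps)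
        qed
        then have a2: "sg powr (q - 1) / q * C * n powr q = n * (C * e powr (q - 1) / q)"
          by (simp add: field_simps)
        show ?thesis unfolding M_def using a1 a2 by (simp add: distrib_left)
      qed
      also have "ennreal (n * M) = nu E * ennreal M" using real n0 M0 by (simp add: ennreal_mult)
      finally show ?thesis .
    qed
  qed
  then show ?thesis unfolding mu_def E_def M_def .
qed

end

context wsetup begin

lemma Phi_bound_fin:
  assumes C: "\<And>r. r > 0 \<Longrightarrow> Phi (indicator {0<..<r}) \<le> ennreal C * enn_powr (Wfun w r) q"
    and C1: "1 \<le> C" and f: "decp f" and fin: "Phi f < top" and nfin: "nrm f < top"
  shows "Phi f \<le> ennreal C * enn_powr (nrm f) q"
proof -
  obtain P where P: "Phi f = ennreal P" "0 \<le> P" using fin by (cases "Phi f" rule: ennreal_cases) auto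
  obtain N where N: "nrm f = ennreal N" "0 \<le> N" using nfin by (cases "nrm f" rule: ennreal_cases) auto
  define mu where "mu = (\<lambda>s. enn_powr (Wfun w s) (q - 1) * ennreal (w s) * indicator {0<..} s)"
  have mum[measurable]: "mu \<in> borel_measurable borel" unfolding mu_def by measurable
  have Km[measurable]: "Sop f \<in> borel_measurable borel" using Sop_meas[OF f] .
  have Kq1[measurable]: "(\<lambda>s. enn_powr (Sop f s) (q - 1)) \<in> borel_measurable borel" by (rule enn_powr_meas[OF Km])
  have fm[measurable]: "(\<lambda>u. f u * indicator {0<..} u) \<in> borel_measurable borel" using decp_meas0[OF f] .
  have key: "P \<le> N * ((q - 1) / q / e * P + C * e powr (q - 1) / q)" if e: "0 < e" for e
  proof -
    define M where "M = (q - 1) / q / e * P + C * e powr (q - 1) / q"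
    have M0: "0 \<le> M" unfolding M_def using q1 P e C1 by auto
    have "Phi f = (\<integral>\<^sup>+ s. mu s * enn_powr (Sop f s) (q - 1) * Sop f s \<partial>lborel)"
      unfolding Phi_def Rq_def mu_def
    proof (intro nn_integral_cong)
      fix s
      have "enn_powr (Sop f s) (q - 1) * Sop f s = enn_powr (Sop f s) q"
        using enn_powr_add[of "q - 1" 1 "Sop f s"] q1 by simp
      then have "enn_powr (Wfun w s) (q - 1) * ennreal (w s) * indicator {0<..} s * enn_powr (Sop f s) (q - 1) * Sop f s
          = (enn_powr (Wfun w s) (q - 1) * ennreal (w s) * indicator {0<..} s) * enn_powr (Sop f s) q"
        by (simp only: mult.assoc)
      then show "enn_powr (Sop f s) q * enn_powr (Wfun w s) (q - 1) * ennreal (w s) * indicator {0<..} s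
        = enn_powr (Wfun w s) (q - 1) * ennreal (w s) * indicator {0<..} s * enn_powr (Sop f s) (q - 1) * Sop f s"
        by (simp only: mult_ac)
    qed
    also have "\<dots> = (\<integral>\<^sup>+ s. (\<integral>\<^sup>+ l. mu s * enn_powr (Sop f s) (q - 1) * (indicator {0<..} l * kk f l s) \<partial>lborel) \<partial>lborel)"
    proof (intro nn_integral_cong)
      fix s
      show "mu s * enn_powr (Sop f s) (q - 1) * Sop f s = (\<integral>\<^sup>+ l. mu s * enn_powr (Sop f s) (q - 1) * (indicator {0<..} l * kk f l s) \<partial>lborel)"
        unfolding Sop_layer[OF f, of s] by (rule nn_integral_cmult[symmetric]) (unfold kk_def, measurable)
    qed
    also have "\<dots> = (\<integral>\<^sup>+ l. (\<integral>\<^sup>+ s. mu s * enn_powr (Sop f s) (q - 1) * (indicator {0<..} l * kk f l s) \<partial>lborel) \<partial>lborel)"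
      by (rule lborel_pair.Fubini'[symmetric]) (unfold kk_def, measurable)
    also have "\<dots> \<le> (\<integral>\<^sup>+ l. indicator {0<..} l * nu (Lev f (ennreal l)) * ennreal M \<partial>lborel)"
    proof (intro nn_integral_mono)
      fix l :: real
      show "(\<integral>\<^sup>+ s. mu s * enn_powr (Sop f s) (q - 1) * (indicator {0<..} l * kk f l s) \<partial>lborel)
        \<le> indicator {0<..} l * nu (Lev f (ennreal l)) * ennreal M"
      proof (cases "0 < l")
        case True
        have "(\<integral>\<^sup>+ s. mu s * enn_powr (Sop f s) (q - 1) * (indicator {0<..} l * kk f l s) \<partial>lborel)
            = (\<integral>\<^sup>+ s. enn_powr (Wfun w s) (q - 1) * ennreal (w s) * indicator {0<..} s * enn_powr (Sop f s) (q - 1) * kk f l s \<partial>lborel)"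
          using True unfolding mu_def by (intro nn_integral_cong) (simp add: mult_ac)
        also have "\<dots> \<le> nu (Lev f (ennreal l)) * ennreal M"
          unfolding M_def by (rule per_l_bound[OF C C1 f P e True])
        finally show ?thesis using True by simp
      qed simp
    qed
    also have "\<dots> = nrm f * ennreal M"
    proof -
      have [measurable]: "(\<lambda>l. nu (Lev f (ennreal l))) \<in> borel_measurable borel"
        by (rule antitone_meas) (auto intro!: nu_mono Lev_anti ennreal_leI)
      show ?thesis unfolding nrm_layer[OF f] by (rule nn_integral_multc) measurable
    qed
    finally have "ennreal P \<le> ennreal (N * M)" using P N M0 by (simp add: ennreal_mult)
    then have "P \<le> N * M" using N M0 by (subst (asm) ennreal_le_iff) auto
    then show ?thesis unfolding M_def .
  qed
  have "P \<le> C * N powr q"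
  proof (cases "N = 0")
    case True
    then have "P \<le> 0" using key[of 1] by simp
    then show ?thesis using True by simp
  next
    case False
    then have N0: "0 < N" using N by auto
    have "P \<le> N * ((q - 1) / q / N * P + C * N powr (q - 1) / q)" using key[OF N0] .
    also have "\<dots> = (q - 1) / q * P + C * (N * N powr (q - 1)) / q" using N0 q1 by (simp add: field_simps)
    also have "N * N powr (q - 1) = N powr q" using N0 powr_add[of N 1 "q - 1"] by simp
    finally have "P \<le> (q - 1) / q * P + C * N powr q / q" .
    then have "q * P \<le> (q - 1) * P + C * N powr q" using q1 by (simp add: field_simps)
    then show ?thesis by (simp add: algebra_simps)
  qed
  then have "ennreal P \<le> ennreal C * ennreal (N powr q)" using C1 by (simp add: ennreal_mult[symmetric] del: ennreal_mult)
  then show ?thesis using P N by (simp add: enn_powr_ennreal)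
qed

end

lemma SUP_min_nat: "(SUP n::nat. min x (of_nat n) * (indicator {0<..<real n} u :: ennreal)) = x" if "0 < u"
proof (rule antisym)
  show "(SUP n::nat. min x (of_nat n) * indicator {0<..<real n} u) \<le> x"
    by (intro SUP_least) (auto simp: indicator_def)
  obtain n0 :: nat where n0: "u < real n0" using reals_Archimedean2 by auto
  have ge: "min x (of_nat n) \<le> (SUP n::nat. min x (of_nat n) * indicator {0<..<real n} u)" if "n0 \<le> n" for n
  proof -
    have "u < real n" using n0 that by (meson less_le_trans of_nat_le_iff)
    then have "min x (of_nat n) = min x (of_nat n) * indicator {0<..<real n} u" using \<open>0 < u\<close> by (simp add: indicator_def)
    also have "\<dots> \<le> (SUP n::nat. min x (of_nat n) * indicator {0<..<real n} u)" by (rule SUP_upper) simp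
    finally show ?thesis .
  qed
  show "x \<le> (SUP n::nat. min x (of_nat n) * indicator {0<..<real n} u)"
  proof (cases "x = top")
    case False
    then obtain m where "x < of_nat m" using ennreal_Ex_less_of_nat top.not_eq_extremum by blast
    then have "x = min x (of_nat (max m n0))"
      by (metis (no_types, lifting) le_less_trans max.cobounded1 min.absorb1 nless_le of_nat_mono order_less_imp_le)
    then show ?thesis by (rule order.trans[OF eq_refl ge]) simp
  next
    case True
    have "of_nat m \<le> (SUP n::nat. min x (of_nat n) * indicator {0<..<real n} u)" for m
    proof -
      have "of_nat m \<le> (of_nat (max m n0) :: ennreal)" by simp
      also have "\<dots> = min x (of_nat (max m n0))" using True by simp
      also have "\<dots> \<le> (SUP n::nat. min x (of_nat n) * indicator {0<..<real n} u)" by (rule ge) simp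
      finally show ?thesis .
    qed
    then have "(SUP n::nat. min x (of_nat n) * indicator {0<..<real n} u) = top" by (rule ennreal_top_if_ge_nat)
    then show ?thesis by (metis top_greatest)
  qed
qed

context wsetup begin

lemma Wfun_meas[measurable]: "Wfun w \<in> borel_measurable borel"
proof -
  have "Wfun w = (\<lambda>s. ennreal (Wr s))" by (simp add: fun_eq_iff Wfun_Wr)
  then show ?thesis by simp
qed

lemma Phi_bound:
  assumes C0: "\<And>r. r > 0 \<Longrightarrow> Phi (indicator {0<..<r}) \<le> ennreal C0 * enn_powr (Wfun w r) q"
    and f: "decp f"
  shows "Phi f \<le> ennreal (max C0 1) * enn_powr (nrm f) q"
proof -
  define C where "C = max C0 1"
  have C1: "1 \<le> C" unfolding C_def by simp
  have C: "Phi (indicator {0<..<r}) \<le> ennreal C * enn_powr (Wfun w r) q" if "r > 0" for r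
    using C0[OF that] by (rule order_trans) (auto intro!: mult_right_mono ennreal_leI simp: C_def)
  have "Phi f \<le> ennreal C * enn_powr (nrm f) q"
  proof (cases "nrm f = top")
    case True
    then show ?thesis using C1 by (simp add: ennreal_mult_top)
  next
    case False
    then have nfin: "nrm f < top" by (simp add: top.not_eq_extremum)
    define fn where "fn = (\<lambda>(n::nat) s. min (f s) (of_nat n) * indicator {0<..<real n} s)"
    have fm[measurable]: "(\<lambda>u. f u * indicator {0<..} u) \<in> borel_measurable borel" using decp_meas0[OF f] .
    have fn_eq: "fn n s = min (f s * indicator {0<..} s) (of_nat n) * indicator {0<..<real n} s" for n s
      unfolding fn_def by (auto simp: indicator_def)
    have fnm[measurable]: "fn n \<in> borel_measurable borel" for n
      unfolding fn_eq[abs_def] by measurable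
    have fn_dec: "decp (fn n)" for n
      unfolding decp_def fn_def
    proof (intro allI impI)
      fix s t :: real assume s0: "0 < s" and st0: "s \<le> t"
      then have st: "0 < s \<and> s \<le> t" by simp
      have "f t \<le> f s" using decpD[OF f] st by auto
      then have "min (f t) (of_nat n) \<le> min (f s) (of_nat n)" by (rule min.mono) simp
      moreover have "indicator {0<..<real n} t \<le> (indicator {0<..<real n} s :: ennreal)" using s0 st0 by (auto simp: indicator_def)
      ultimately show "min (f t) (of_nat n) * indicator {0<..<real n} t \<le> min (f s) (of_nat n) * indicator {0<..<real n} s"
        by (rule mult_mono) auto
    qed
    have fn_le: "fn n s \<le> f s" for n s unfolding fn_def by (auto simp: indicator_def)
    have fn_inc: "fn n s \<le> fn m s" if "n \<le> m" for n m s
    proof -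
      have "min (f s) (of_nat n) \<le> min (f s) (of_nat m)" using that by (intro min.mono) auto
      moreover have "indicator {0<..<real n} s \<le> (indicator {0<..<real m} s :: ennreal)" using that by (auto simp: indicator_def)
      ultimately show ?thesis unfolding fn_def by (rule mult_mono) auto
    qed
    have nrm_le: "nrm (fn n) \<le> nrm f" for n
      unfolding nrm_def by (intro nn_integral_mono mult_right_mono fn_le) auto
    have Phin: "Phi (fn n) \<le> ennreal C * enn_powr (nrm f) q" for n
    proof -
      have fin: "Phi (fn n) < top"
      proof (cases "n = 0")
        case True
        then have "fn n = (\<lambda>s. 0)" unfolding fn_def by (auto simp: fun_eq_iff indicator_def)
        then show ?thesis unfolding Phi_def Rq_def Sop_def by simp
      next
        case False
        have "Phi (fn n) \<le> Phi (\<lambda>s. of_nat n * indicator {0<..<real n} s)"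
          by (intro Phi_mono) (auto simp: fn_def indicator_def)
        also have "\<dots> = (\<integral>\<^sup>+ t. enn_powr (of_nat n) q * (enn_powr (Sop (indicator {0<..<real n}) t) q * enn_powr (Wfun w t) (q - 1) * ennreal (w t) * indicator {0<..} t) \<partial>lborel)"
          unfolding Phi_def Rq_def using q1 by (intro nn_integral_cong) (simp add: Sop_cmult enn_powr_mult mult_ac)
        also have "\<dots> = enn_powr (of_nat n) q * Phi (indicator {0<..<real n})"
        proof -
          have "decp (indicator {0<..<real n})" unfolding decp_def by (auto simp: indicator_def)
          from Sop_meas[OF this] have [measurable]: "Sop (indicator {0<..<real n}) \<in> borel_measurable borel" .
          show ?thesis unfolding Phi_def Rq_def by (rule nn_integral_cmult) measurable
        qed
        also have "\<dots> \<le> enn_powr (of_nat n) q * (ennreal C * enn_powr (Wfun w (real n)) q)"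
          using False by (intro mult_left_mono C) auto
        also have "\<dots> < top"
        proof -
          have a1: "enn_powr (of_nat n) q \<noteq> top" by (simp add: enn_powr_eq_top_iff)
          have a2: "enn_powr (Wfun w (real n)) q \<noteq> top" using Wfun_fin[of "real n"] by (simp add: enn_powr_eq_top_iff)
          show ?thesis using a1 a2 by (simp add: ennreal_mult_eq_top_iff less_top[symmetric])
        qed
        finally show ?thesis .
      qed
      have "Phi (fn n) \<le> ennreal C * enn_powr (nrm (fn n)) q"
        by (rule Phi_bound_fin[OF C C1 fn_dec fin]) (use nrm_le[of n] nfin in auto)
      also have "\<dots> \<le> ennreal C * enn_powr (nrm f) q"
        using q1 by (intro mult_left_mono enn_powr_mono nrm_le) auto
      finally show ?thesis .
    qed
    define mu where "mu = (\<lambda>s. enn_powr (Wfun w s) (q - 1) * ennreal (w s) * indicator {0<..} s)"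
    have mum[measurable]: "mu \<in> borel_measurable borel" unfolding mu_def by measurable
    have PhiE: "Phi g = (\<integral>\<^sup>+ s. mu s * enn_powr (Sop g s) q \<partial>lborel)" for g
      unfolding Phi_def Rq_def mu_def by (intro nn_integral_cong) (simp add: mult_ac)
    have Sop_SUP: "Sop f t \<le> (SUP n. Sop (fn n) t)" if t: "0 < t" for t
    proof -
      have "(\<integral>\<^sup>+ u\<in>{0<..<t}. f u \<partial>lborel) = (\<integral>\<^sup>+ u. (SUP n. fn n u * indicator {0<..<t} u) \<partial>lborel)"
      proof (intro nn_integral_cong)
        fix u
        show "f u * indicator {0<..<t} u = (SUP n. fn n u * indicator {0<..<t} u)"
        proof (cases "0 < u")
          case True
          have "(SUP n. fn n u * indicator {0<..<t} u) = (SUP n. fn n u) * indicator {0<..<t} u"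
            by (simp add: SUP_mult_right_ennreal)
          also have "(SUP n. fn n u) = f u" unfolding fn_def using SUP_min_nat[OF True] by simp
          finally show ?thesis by simp
        qed (simp add: indicator_def)
      qed
      also have "\<dots> = (SUP n. \<integral>\<^sup>+ u. fn n u * indicator {0<..<t} u \<partial>lborel)"
        by (intro nn_integral_monotone_convergence_SUP) (auto simp: incseq_def le_fun_def intro!: mult_right_mono fn_inc)
      finally have "Sop f t = ennreal (1 / t) * (SUP n. \<integral>\<^sup>+ u\<in>{0<..<t}. fn n u \<partial>lborel)" unfolding Sop_def by simp
      also have "\<dots> = (SUP n. Sop (fn n) t)" unfolding Sop_def by (simp add: SUP_mult_left_ennreal)
      finally show ?thesis by simp
    qed
    have "Phi f \<le> (\<integral>\<^sup>+ s. (SUP n. mu s * enn_powr (Sop (fn n) s) q) \<partial>lborel)"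
      unfolding PhiE
    proof (intro nn_integral_mono)
      fix s
      show "mu s * enn_powr (Sop f s) q \<le> (SUP n. mu s * enn_powr (Sop (fn n) s) q)"
      proof (cases "0 < s")
        case True
        have "enn_powr (Sop f s) q \<le> enn_powr (SUP n. Sop (fn n) s) q"
          using q1 Sop_SUP[OF True] by (intro enn_powr_mono) auto
        also have "\<dots> = (SUP n. enn_powr (Sop (fn n) s) q)"
          using enn_powr_SUP[of q "range (\<lambda>n. Sop (fn n) s)"] q1 by (simp add: image_image)
        finally show ?thesis by (simp add: SUP_mult_left_ennreal[symmetric] mult_left_mono)
      qed (simp add: mu_def)
    qed
    also have "\<dots> = (SUP n. \<integral>\<^sup>+ s. mu s * enn_powr (Sop (fn n) s) q \<partial>lborel)"
    proof (intro nn_integral_monotone_convergence_SUP)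
      show "incseq (\<lambda>n s. mu s * enn_powr (Sop (fn n) s) q)"
        unfolding incseq_def le_fun_def using q1
        by (auto intro!: mult_left_mono enn_powr_mono Sop_mono fn_inc)
      fix n show "(\<lambda>s. mu s * enn_powr (Sop (fn n) s) q) \<in> borel_measurable lborel"
        using Sop_meas[OF fn_dec[of n]] by measurable
    qed
    also have "\<dots> = (SUP n. Phi (fn n))" unfolding PhiE ..
    also have "\<dots> \<le> ennreal C * enn_powr (nrm f) q" by (intro SUP_least Phin)
    finally show ?thesis .
  qed
  then show ?thesis unfolding C_def .
qed

end

lemma box_measure:
  assumes r: "0 < r"
  shows "\<exists>B::'a::euclidean_space set. B \<in> sets borel \<and> emeasure lebesgue B = ennreal r"
proof -
  define c where "c = r powr (1 / real DIM('a))"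
  have c0: "0 < c" unfolding c_def using r by simp
  have cD: "c ^ DIM('a) = r"
  proof -
    have "c ^ DIM('a) = c powr real DIM('a)" using c0 by (simp add: powr_realpow)
    also have "\<dots> = r" unfolding c_def using r by (simp add: powr_powr)
    finally show ?thesis .
  qed
  have One: "b \<in> Basis \<Longrightarrow> One \<bullet> b = (1::real)" for b :: 'a by simp
  have "emeasure lborel (box 0 (c *\<^sub>R One) :: 'a set) = ennreal (\<Prod>b\<in>(Basis::'a set). (c *\<^sub>R One - 0) \<bullet> b)"
    using c0 by (subst emeasure_lborel_box) (auto simp: One)
  also have "(\<Prod>b\<in>(Basis::'a set). (c *\<^sub>R One - 0) \<bullet> b) = c ^ DIM('a)" by (simp add: One)
  finally have "emeasure lborel (box 0 (c *\<^sub>R One) :: 'a set) = ennreal r" using cD by simp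
  then show ?thesis by (intro exI[of _ "box 0 (c *\<^sub>R One)"]) auto
qed


lemma dec_rearr_box:
  fixes B :: "'a::euclidean_space set"
  assumes B: "B \<in> sets borel" "emeasure lebesgue B = ennreal r" and r: "0 < r" and t: "0 < t"
  shows "dec_rearr (indicator B :: 'a \<Rightarrow> real) t = indicator {0<..<r} t"
proof -
  have lev: "{x \<in> space lebesgue. s < ennreal \<bar>indicator B x :: real\<bar>} = (if s < 1 then B else {})" for s :: ennreal
    by (auto simp: indicator_def)
  have S: "{s. emeasure lebesgue {x \<in> space lebesgue. s < ennreal \<bar>indicator B x :: real\<bar>} \<le> ennreal t}
      = (if t < r then {s. 1 \<le> s} else UNIV)"
    unfolding lev using B r t by (auto simp: ennreal_le_iff not_less split: if_splits)
  show ?thesis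
    unfolding dec_rearr_def rearr_def S using t
    by (cases "t < r") (auto simp: indicator_def Inf_atLeast[unfolded atLeast_def] bot_ennreal)
qed

context wsetup begin

lemma decp_rearr: "decp (rearr M g)"
  unfolding decp_def using rearr_anti by blast

lemma Phi_cong: "(\<And>s. 0 < s \<Longrightarrow> g s = g' s) \<Longrightarrow> Phi g = Phi g'"
  unfolding Phi_def Rq_def by (simp add: Sop_cong[of g g'])

lemma nrm_cong: "(\<And>s. 0 < s \<Longrightarrow> g s = g' s) \<Longrightarrow> nrm g = nrm g'"
  unfolding nrm_def by (intro nn_integral_cong) (auto simp: indicator_def)

lemma Gamma_eq: "Gamma1q_norm w q f = enn_powr (Phi (dec_rearr f)) (1 / q)"
  unfolding Gamma1q_norm_def Phi_def Rq_def max_rearr_def Sop_def ..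

lemma Lambda_eq: "Lambda1_norm w f = nrm (dec_rearr f)"
  unfolding Lambda1_norm_def nrm_def ..

lemma enn_powr_bound:
  assumes "enn_powr X (1 / q) \<le> ennreal C * Y" "0 \<le> C"
  shows "X \<le> ennreal (C powr q) * enn_powr Y q"
proof -
  have "enn_powr (enn_powr X (1 / q)) q \<le> enn_powr (ennreal C * Y) q"
    using assms q1 by (intro enn_powr_mono) auto
  also have "enn_powr (enn_powr X (1 / q)) q = X" using enn_powr_powr[of "1/q" q X] q1 by simp
  also have "enn_powr (ennreal C * Y) q = ennreal (C powr q) * enn_powr Y q"
    using q1 assms by (simp add: enn_powr_mult enn_powr_ennreal)
  finally show ?thesis .
qed

lemma enn_powr_bound2:
  assumes "X \<le> ennreal C * enn_powr Y q" "0 \<le> C"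
  shows "enn_powr X (1 / q) \<le> ennreal (C powr (1 / q)) * Y"
proof -
  have "enn_powr X (1 / q) \<le> enn_powr (ennreal C * enn_powr Y q) (1 / q)"
    using assms q1 by (intro enn_powr_mono) auto
  also have "\<dots> = ennreal (C powr (1 / q)) * Y"
    using q1 assms by (simp add: enn_powr_mult enn_powr_ennreal enn_powr_inv)
  finally show ?thesis .
qed

lemma i_iff_B1:
  "(\<exists>C::real. \<forall>f::'a::euclidean_space \<Rightarrow> real. f \<in> borel_measurable lebesgue \<longrightarrow>
              Gamma1q_norm w q f \<le> ennreal C * Lambda1_norm w f) \<longleftrightarrow> B1 w"
proof
  assume "\<exists>C::real. \<forall>f::'a::euclidean_space \<Rightarrow> real. f \<in> borel_measurable lebesgue \<longrightarrow>
              Gamma1q_norm w q f \<le> ennreal C * Lambda1_norm w f"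
  then obtain C0 where C0: "\<And>f::'a \<Rightarrow> real. f \<in> borel_measurable lebesgue \<Longrightarrow> Gamma1q_norm w q f \<le> ennreal C0 * Lambda1_norm w f"
    by blast
  define C where "C = max C0 0"
  have C: "Gamma1q_norm w q f \<le> ennreal C * Lambda1_norm w f" if "f \<in> borel_measurable lebesgue" for f :: "'a \<Rightarrow> real"
    using C0[OF that] by (rule order_trans) (auto intro!: mult_right_mono ennreal_leI simp: C_def)
  have "Phi (indicator {0<..<r}) \<le> ennreal (C powr q) * enn_powr (Wfun w r) q" if r: "r > 0" for r
  proof -
    obtain B :: "'a set" where B: "B \<in> sets borel" "emeasure lebesgue B = ennreal r" using box_measure[OF r] by blast
    have fm: "(indicator B :: 'a \<Rightarrow> real) \<in> borel_measurable lebesgue"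
      using B(1) by (intro borel_measurable_indicator) auto
    have d: "dec_rearr (indicator B :: 'a \<Rightarrow> real) s = indicator {0<..<r} s" if "0 < s" for s
      by (rule dec_rearr_box[OF B r that])
    have "Gamma1q_norm w q (indicator B :: 'a \<Rightarrow> real) = enn_powr (Phi (indicator {0<..<r})) (1 / q)"
      unfolding Gamma_eq using d by (simp add: Phi_cong[of "dec_rearr (indicator B :: 'a \<Rightarrow> real)" "indicator {0<..<r}"])
    moreover have "Lambda1_norm w (indicator B :: 'a \<Rightarrow> real) = Wfun w r"
      unfolding Lambda_eq using d
      by (simp add: nrm_cong[of "dec_rearr (indicator B :: 'a \<Rightarrow> real)" "indicator {0<..<r}"])
         (simp add: nrm_def Wfun_def, intro nn_integral_cong, auto simp: indicator_def)
    ultimately have "enn_powr (Phi (indicator {0<..<r})) (1 / q) \<le> ennreal C * Wfun w r"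
      using C[OF fm] by simp
    then show ?thesis by (rule enn_powr_bound) (simp add: C_def)
  qed
  then show "B1 w" by (intro P_imp_B1) auto
next
  assume "B1 w"
  then obtain C0 where C0: "\<And>r. r > 0 \<Longrightarrow> Phi (indicator {0<..<r}) \<le> ennreal C0 * enn_powr (Wfun w r) q"
    using B1_imp_P by blast
  define C where "C = max C0 1"
  have "Gamma1q_norm w q f \<le> ennreal (C powr (1 / q)) * Lambda1_norm w f" for f :: "'a \<Rightarrow> real"
  proof -
    have "Phi (dec_rearr f) \<le> ennreal C * enn_powr (nrm (dec_rearr f)) q"
      unfolding C_def dec_rearr_def by (rule Phi_bound[OF C0 decp_rearr])
    then show ?thesis unfolding Gamma_eq Lambda_eq by (rule enn_powr_bound2) (simp add: C_def)
  qed
  then show "\<exists>C::real. \<forall>f::'a::euclidean_space \<Rightarrow> real. f \<in> borel_measurable lebesgue \<longrightarrow>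
              Gamma1q_norm w q f \<le> ennreal C * Lambda1_norm w f" by blast
qed

end

context wsetup begin

lemma L1q_eq: "L1q_norm w q g = enn_powr (Lq g) (1 / q)"
  unfolding L1q_norm_def Lq_def ..

lemma hardy_eq: "hardy f = Sop (\<lambda>s. ennreal (f s))"
  unfolding hardy_def Sop_def by (rule ext) simp

lemma ii_iff_B1:
  "(\<exists>C::real. \<forall>f::real \<Rightarrow> real. (\<forall>t>0. 0 \<le> f t) \<and> decreasing_on_pos f \<longrightarrow>
      L1q_norm w q (hardy f) \<le> ennreal C * (\<integral>\<^sup>+ t \<in> {0<..}. ennreal (f t * w t) \<partial>lborel)) \<longleftrightarrow> B1 w"
proof
  assume "\<exists>C::real. \<forall>f::real \<Rightarrow> real. (\<forall>t>0. 0 \<le> f t) \<and> decreasing_on_pos f \<longrightarrow>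
      L1q_norm w q (hardy f) \<le> ennreal C * (\<integral>\<^sup>+ t \<in> {0<..}. ennreal (f t * w t) \<partial>lborel)"
  then obtain C0 where C0: "\<And>f::real \<Rightarrow> real. (\<forall>t>0. 0 \<le> f t) \<and> decreasing_on_pos f \<Longrightarrow>
      L1q_norm w q (hardy f) \<le> ennreal C0 * (\<integral>\<^sup>+ t \<in> {0<..}. ennreal (f t * w t) \<partial>lborel)" by blast
  define C where "C = max C0 0"
  have C0': "0 \<le> C" unfolding C_def by simp
  have "Phi (indicator {0<..<r}) \<le> ennreal (q * 2 powr q * C powr q) * enn_powr (Wfun w r) q" if r: "r > 0" for r
  proof -
    define f :: "real \<Rightarrow> real" where "f = indicator {0<..<r}"
    have fc: "(\<forall>t>0. 0 \<le> f t) \<and> decreasing_on_pos f"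
      unfolding f_def decreasing_on_pos_def by (auto simp: indicator_def)
    have h: "hardy f = Sop (indicator {0<..<r})" unfolding hardy_eq f_def by (simp add: ennreal_indicator)
    have I: "(\<integral>\<^sup>+ t \<in> {0<..}. ennreal (f t * w t) \<partial>lborel) = Wfun w r"
      unfolding f_def Wfun_def by (intro nn_integral_cong) (auto simp: indicator_def)
    have "L1q_norm w q (hardy f) \<le> ennreal C * Wfun w r"
      using C0[OF fc] unfolding I by (rule order_trans) (auto intro!: mult_right_mono ennreal_leI simp: C_def)
    then have "Lq (Sop (indicator {0<..<r})) \<le> ennreal (C powr q) * enn_powr (Wfun w r) q"
      unfolding L1q_eq h by (rule enn_powr_bound[OF _ C0'])
    have dS: "decp (Sop (indicator {0<..<r}))" by (intro decp_Sop) (auto simp: decp_def indicator_def)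
    have "Phi (indicator {0<..<r}) \<le> ennreal (q * 2 powr q) * Lq (Sop (indicator {0<..<r}))"
      unfolding Phi_def by (rule R_le_L[OF dS])
    also have "\<dots> \<le> ennreal (q * 2 powr q) * (ennreal (C powr q) * enn_powr (Wfun w r) q)"
      by (intro mult_left_mono \<open>Lq _ \<le> _\<close>) auto
    also have "\<dots> = ennreal (q * 2 powr q * C powr q) * enn_powr (Wfun w r) q"
      using q1 by (simp add: ennreal_mult mult.assoc)
    finally show ?thesis .
  qed
  then show "B1 w" by (intro P_imp_B1) auto
next
  assume "B1 w"
  then obtain C0 where C0: "\<And>r. r > 0 \<Longrightarrow> Phi (indicator {0<..<r}) \<le> ennreal C0 * enn_powr (Wfun w r) q"
    using B1_imp_P by blast
  define C where "C = 2 powr q / q * max C0 1"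
  have C0': "0 \<le> C" unfolding C_def using q1 by simp
  have "L1q_norm w q (hardy f) \<le> ennreal (C powr (1 / q)) * (\<integral>\<^sup>+ t \<in> {0<..}. ennreal (f t * w t) \<partial>lborel)"
    if fc: "(\<forall>t>0. 0 \<le> f t) \<and> decreasing_on_pos f" for f :: "real \<Rightarrow> real"
  proof -
    define g where "g = (\<lambda>s. ennreal (f s))"
    have dg: "decp g" using fc unfolding g_def decp_def decreasing_on_pos_def by (auto intro: ennreal_leI)
    have I: "(\<integral>\<^sup>+ t \<in> {0<..}. ennreal (f t * w t) \<partial>lborel) = nrm g"
      unfolding nrm_def g_def using fc w_nonneg
      by (intro nn_integral_cong) (auto simp: indicator_def ennreal_mult)
    have "Lq (Sop g) \<le> ennreal (2 powr q / q) * Rq (Sop g)" by (rule L_le_R[OF decp_Sop[OF dg]])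
    also have "Rq (Sop g) = Phi g" unfolding Phi_def ..
    also have "ennreal (2 powr q / q) * Phi g \<le> ennreal (2 powr q / q) * (ennreal (max C0 1) * enn_powr (nrm g) q)"
      by (intro mult_left_mono Phi_bound[OF C0 dg]) auto
    also have "\<dots> = ennreal C * enn_powr (nrm g) q"
    proof -
      have "ennreal (2 powr q / q) * ennreal (max C0 1) = ennreal C"
        unfolding C_def by (rule ennreal_mult[symmetric]) (use q1 in auto)
      then show ?thesis by (simp add: mult.assoc[symmetric])
    qed
    finally have "Lq (Sop g) \<le> ennreal C * enn_powr (nrm g) q" .
    then have "enn_powr (Lq (Sop g)) (1 / q) \<le> ennreal (C powr (1 / q)) * nrm g"
      by (rule enn_powr_bound2[OF _ C0'])
    then show ?thesis unfolding L1q_eq hardy_eq I g_def .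
  qed
  then show "\<exists>C::real. \<forall>f::real \<Rightarrow> real. (\<forall>t>0. 0 \<le> f t) \<and> decreasing_on_pos f \<longrightarrow>
      L1q_norm w q (hardy f) \<le> ennreal C * (\<integral>\<^sup>+ t \<in> {0<..}. ennreal (f t * w t) \<partial>lborel)" by blast
qed

end

theorem theorem3p4:
  fixes w :: "real \<Rightarrow> real" and q :: real
  assumes "weight w" and "decreasing_on_pos w" and "1 < q"
  shows "((\<exists>C::real. \<forall>f::'a::euclidean_space \<Rightarrow> real. f \<in> borel_measurable lebesgue \<longrightarrow>
              Gamma1q_norm w q f \<le> ennreal C * Lambda1_norm w f)
          \<longleftrightarrow> (\<exists>C::real. \<forall>f::real \<Rightarrow> real. (\<forall>t>0. 0 \<le> f t) \<and> decreasing_on_pos f \<longrightarrow>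
              L1q_norm w q (hardy f) \<le> ennreal C * (\<integral>\<^sup>+ t \<in> {0<..}. ennreal (f t * w t) \<partial>lborel)))
       \<and> ((\<exists>C::real. \<forall>f::real \<Rightarrow> real. (\<forall>t>0. 0 \<le> f t) \<and> decreasing_on_pos f \<longrightarrow>
              L1q_norm w q (hardy f) \<le> ennreal C * (\<integral>\<^sup>+ t \<in> {0<..}. ennreal (f t * w t) \<partial>lborel))
          \<longleftrightarrow> B1 w)"
proof -
  interpret wsetup w q using assms by unfold_locales
  show ?thesis using i_iff_B1 ii_iff_B1 by blast
qed


end
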